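(* Let $V$ be the $\mathbb Z$-graded $\mathbb Q$-vector space with basis $\alpha_{i,j}$, $(i,j)\in\mathbb Z^2_{\ge1}$, $|\alpha_{i,j}|=-1-2i-2j$, and $\beta_{i,j}$, $(i,j)\in\mathbb Z^2_{\ge0}\setminus\{(0,0)\}$, $|\beta_{i,j}|=-2-2i-2j$, with the $L_\infty$ structure: $\ell^1(\alpha_{i,j})=j\beta_{i-1,j}-i\beta_{i,j-1}$, $\ell^1(\beta_{i,j})=0$, $\ell^2(\alpha_{i,j},\alpha_{k,l})=(il-jk)\alpha_{i+k,j+l}$, $\ell^2(\alpha_{i,j},\beta_{k,l})=\ell^2(\beta_{k,l},\alpha_{i,j})=(il-jk)\beta_{i+k,j+l}$, $\ell^2(\beta,\beta)=0$, $\ell^k=0$ for $k\ge3$. Let $C_o$ be the abelian $L_\infty$ algebra (all operations zero) with basis $\mathfrak q_m$, $m\ge1$, $|\mathfrak q_m|=-2-2m$. Define $\tilde\epsilon^k:\odot^kV\to C_o$ by $$\tilde\epsilon^k(\beta_{i_1,j_1},\dots,\beta_{i_k,j_k})=\frac{\mathfrak q_{(i_1+j_1)+\cdots+(i_k+j_k)+k-1}}{(i_1+\cdots+i_k)!\,(j_1+\cdots+j_k)!}$$ for all $(i_s,j_s)\in\mathbb Z^2_{\ge0}\setminus\{(0,0)\}$, and $\tilde\epsilon^k=0$ on every input containing some $\alpha_{i,j}$. Then $\tilde\epsilon=(\tilde\epsilon^1,\tilde\epsilon^2,\dots)$ is an $L_\infty$ homomorphism $V\to C_o$.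
   Context: Conventions: for a graded vector space $V$, $\odot^kV$ is the quotient of $V^{\otimes k}$ by the symmetric group acting with Koszul signs, and $\bar SV=\bigoplus_{k\ge1}\odot^kV$. For $\sigma\in\Sigma_k$, $\diamondsuit(\sigma)=(-1)^{\#\{\,|v_a||v_b|\text{ odd}:\ a<b,\ \sigma(a)>\sigma(b)\}}$. An $L_\infty$ algebra is given by degree $1$ maps $\ell^k:\odot^kV\to V$ whose coderivation extension $\hat\ell(v_1\odot\cdots\odot v_k)=\sum_{i=1}^k\sum_{\sigma\in\mathrm{Sh}(i,k-i)}\diamondsuit(\sigma)\,\ell^i(v_{\sigma(1)}\odot\cdots\odot v_{\sigma(i)})\odot v_{\sigma(i+1)}\odot\cdots\odot v_{\sigma(k)}$ satisfies $\hat\ell\circ\hat\ell=0$ (here $\mathrm{Sh}(i,k-i)$ are permutations increasing on $\{1..i\}$ and on $\{i+1..k\}$); the operations $\ell^k$ are graded symmetric and are specified above on basis elements. An $L_\infty$ homomorphism $\Phi:V\to W$ is given by degree $0$ maps $\Phi^k:\odot^kV\to W$ such that the induced coalgebra map $\hat\Phi(v_1\odot\cdots\odot v_k)=\sum_{s\ge1}\sum_{k_1+\cdots+k_s=k,\ k_r\ge1}\sum_{\sigma\in\Sigma_k}\frac{\diamondsuit(\sigma)}{s!\,k_1!\cdots k_s!}(\Phi^{k_1}\odot\cdots\odot\Phi^{k_s})(v_{\sigma(1)}\odot\cdots\odot v_{\sigma(k)})$ satisfies $\hat\Phi\circ\hat\ell_V=\hat\ell_W\circ\hat\Phi$. Since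 $C_o$ is abelian, this means $\hat{\tilde\epsilon}\circ\hat\ell_V=0$. *)

theory Defs
  imports Complex_Main "HOL-Library.Multiset" "HOL-Combinatorics.Permutations"
begin

datatype gen = Alpha nat nat | Beta nat nat

fun valid_gen :: "gen \<Rightarrow> bool" where
  "valid_gen (Alpha i j) = (1 \<le> i \<and> 1 \<le> j)"
| "valid_gen (Beta i j) = ((i, j) \<noteq> (0, 0))"

fun deg :: "gen \<Rightarrow> int" where
  "deg (Alpha i j) = -1 - 2 * int i - 2 * int j"
| "deg (Beta i j) = -2 - 2 * int i - 2 * int j"

definition degC :: "nat \<Rightarrow> int" where
  "degC m = -2 - 2 * int m"

fun l1 :: "gen \<Rightarrow> (rat \<times> gen) list" where
  "l1 (Alpha i j) = [(of_nat j, Beta (i - 1) j), (- of_nat i, Beta i (j - 1))]"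
| "l1 (Beta i j) = []"

fun l2 :: "gen \<Rightarrow> gen \<Rightarrow> (rat \<times> gen) list" where
  "l2 (Alpha i j) (Alpha k l) =
     [(of_int (int i * int l - int j * int k), Alpha (i + k) (j + l))]"
| "l2 (Alpha i j) (Beta k l) =
     [(of_int (int i * int l - int j * int k), Beta (i + k) (j + l))]"
| "l2 (Beta k l) (Alpha i j) =
     [(of_int (int i * int l - int j * int k), Beta (i + k) (j + l))]"
| "l2 (Beta i j) (Beta k l) = []"

fun ellV :: "gen list \<Rightarrow> (rat \<times> gen) list" where
  "ellV [g] = l1 g"
| "ellV [g, h] = l2 g h"
| "ellV _ = []"

definition permute_list :: "(nat \<Rightarrow> nat) \<Rightarrow> 'a list \<Rightarrow> 'a list" where
  "permute_list \<sigma> vs = map (\<lambda>a. vs ! \<sigma> a) [0..<length vs]"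

text \<open>Koszul sign of v_1..v_k |-> v_sigma(1)..v_sigma(k) (0-based positions).\<close>
definition koszul :: "gen list \<Rightarrow> (nat \<Rightarrow> nat) \<Rightarrow> rat" where
  "koszul vs \<sigma> = (-1) ^ card {(a, b). a < b \<and> b < length vs \<and> \<sigma> a > \<sigma> b \<and>
        odd (deg (vs ! \<sigma> a) * deg (vs ! \<sigma> b))}"

definition shuffles :: "nat \<Rightarrow> nat \<Rightarrow> (nat \<Rightarrow> nat) set" where
  "shuffles i k = {\<sigma>. \<sigma> permutes {..<k} \<and> strict_mono_on {..<i} \<sigma> \<and> strict_mono_on {i..<k} \<sigma>}"

text \<open>Elements of C_o: formal linear combinations of q_m, as lists of (coefficient, m).
  Since all q_m have even degree, the symmetric coalgebra of C_o is the polynomial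
  algebra; a monomial q_{m1} .. q_{ms} is the multiset {#m1,..,ms#}.\<close>

fun prodC :: "(rat \<times> nat) list list \<Rightarrow> (rat \<times> nat multiset) list" where
  "prodC [] = [(1, {#})]"
| "prodC (x # xs) = concat (map (\<lambda>(c, m). map (\<lambda>(d, M). (c * d, add_mset m M)) (prodC xs)) x)"

definition coeffS :: "(rat \<times> nat multiset) list \<Rightarrow> nat multiset \<Rightarrow> rat" where
  "coeffS ts M = sum_list (map fst (filter (\<lambda>t. snd t = M) ts))"

definition coeffC :: "(rat \<times> nat) list \<Rightarrow> nat \<Rightarrow> rat" where
  "coeffC ts m = sum_list (map fst (filter (\<lambda>t. snd t = m) ts))"

fun blocks :: "nat list \<Rightarrow> 'a list \<Rightarrow> 'a list list" where
  "blocks [] xs = []"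
| "blocks (n # ns) xs = take n xs # blocks ns (drop n xs)"

definition compositions :: "nat \<Rightarrow> nat list set" where
  "compositions k = {ks. sum_list ks = k \<and> (\<forall>x\<in>set ks. 1 \<le> x)}"

text \<open>Induced coalgebra map Phi-hat on v_1 .. v_k (basis elements); Phi vs = Phi^k(vs).
  Result: coefficient of the monomial M in the symmetric coalgebra of C_o.\<close>
definition Phihat :: "(gen list \<Rightarrow> (rat \<times> nat) list) \<Rightarrow> gen list \<Rightarrow> nat multiset \<Rightarrow> rat" where
  "Phihat Phi vs M =
     (\<Sum>ks\<in>compositions (length vs). \<Sum>\<sigma>\<in>{\<sigma>. \<sigma> permutes {..<length vs}}.
        koszul vs \<sigma> / (of_nat (fact (length ks)) * of_nat (prod_list (map fact ks))) *
        coeffS (prodC (map Phi (blocks ks (permute_list \<sigma> vs)))) M)"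

text \<open>(Phi-hat o l-hat_V)(v_1 .. v_k), using linearity of Phi-hat.\<close>
definition Phihat_lhat :: "(gen list \<Rightarrow> (rat \<times> nat) list) \<Rightarrow> gen list \<Rightarrow> nat multiset \<Rightarrow> rat" where
  "Phihat_lhat Phi vs M =
     (\<Sum>i\<in>{1..length vs}. \<Sum>\<sigma>\<in>shuffles i (length vs).
        koszul vs \<sigma> *
        sum_list (map (\<lambda>(c, g). c * Phihat Phi (g # drop i (permute_list \<sigma> vs)) M)
                      (ellV (take i (permute_list \<sigma> vs)))))"

text \<open>L-infinity homomorphism V -> C_o (C_o abelian, so l-hat of C_o is zero):
  each Phi^k is a degree-0, graded symmetric map into C_o, and Phi-hat o l-hat_V = 0.\<close>
definition Linf_hom_V_Co :: "(gen list \<Rightarrow> (rat \<times> nat) list) \<Rightarrow> bool" where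
  "Linf_hom_V_Co Phi \<longleftrightarrow>
     (\<forall>vs. vs \<noteq> [] \<and> (\<forall>g\<in>set vs. valid_gen g) \<longrightarrow>
        (\<forall>(c, m)\<in>set (Phi vs). c \<noteq> 0 \<longrightarrow> 1 \<le> m \<and> degC m = sum_list (map deg vs)) \<and>
        (\<forall>\<sigma> m. \<sigma> permutes {..<length vs} \<longrightarrow>
            coeffC (Phi (permute_list \<sigma> vs)) m = koszul vs \<sigma> * coeffC (Phi vs) m) \<and>
        (\<forall>M. Phihat_lhat Phi vs M = 0))"

fun is_beta :: "gen \<Rightarrow> bool" where
  "is_beta (Beta i j) = True"
| "is_beta (Alpha i j) = False"

fun idx1 :: "gen \<Rightarrow> nat" where
  "idx1 (Alpha i j) = i" | "idx1 (Beta i j) = i"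

fun idx2 :: "gen \<Rightarrow> nat" where
  "idx2 (Alpha i j) = j" | "idx2 (Beta i j) = j"

definition eps_tilde :: "gen list \<Rightarrow> (rat \<times> nat) list" where
  "eps_tilde vs =
     (if vs \<noteq> [] \<and> (\<forall>g\<in>set vs. is_beta g)
      then [(1 / (of_nat (fact (sum_list (map idx1 vs))) * of_nat (fact (sum_list (map idx2 vs)))),
             sum_list (map (\<lambda>g. idx1 g + idx2 g) vs) + length vs - 1)]
      else [])"

end

theory Submission
  imports Defs "HOL-Combinatorics.Multiset_Permutations"
begin

lemma prodC_Nil_mem: "[] \<in> set xs \<Longrightarrow> prodC xs = []"
  by (induction xs) auto

lemma coeffS_Nil[simp]: "coeffS [] M = 0"
  by (simp add: coeffS_def)

definition smul :: "rat \<Rightarrow> nat \<Rightarrow> (nat multiset \<Rightarrow> rat) \<Rightarrow> nat multiset \<Rightarrow> rat" where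
  "smul c m Z M = (if m \<in># M then c * Z (M - {#m#}) else 0)"

lemma coeffS_map_add:
  "coeffS (map (\<lambda>(d, M'). (c * d, add_mset m M')) ts) M = smul c m (coeffS ts) M"
proof (induction ts)
  case Nil
  then show ?case by (simp add: smul_def)
next
  case (Cons t ts)
  obtain d N where t: "t = (d, N)" by force
  have "add_mset m N = M \<longleftrightarrow> m \<in># M \<and> N = M - {#m#}"
    by (metis add_mset_remove_trivial insert_DiffM union_single_eq_member)
  then show ?case using Cons t by (auto simp: coeffS_def smul_def algebra_simps)
qed

lemma coeffS_prodC_Cons1:
  "coeffS (prodC ([(c, m)] # xs)) M = smul c m (coeffS (prodC xs)) M"
  by (simp add: coeffS_map_add)

lemma sum_smul: "(\<Sum>x\<in>S. smul c m (Z x) M) = smul c m (\<lambda>M. \<Sum>x\<in>S. Z x M) M"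
  by (simp add: smul_def sum_distrib_left)

lemma smul_cong: "(\<And>M. Z M = Z' M) \<Longrightarrow> smul c m Z M = smul c m Z' M"
  by (simp add: smul_def)

lemma smul_zero[simp]: "smul 0 m Z M = 0"
  by (simp add: smul_def)

lemma smul_add_coeff: "smul c m Z M + smul d m Z M = smul (c + d) m Z M"
  by (simp add: smul_def algebra_simps)

lemma smul_sum_coeff: "(\<Sum>x\<in>S. smul (c x) m Z M) = smul (\<Sum>x\<in>S. c x) m Z M"
  by (simp add: smul_def sum_distrib_right)

lemma smul_scale: "a * smul c m Z M = smul (a * c) m Z M"
  by (simp add: smul_def)

lemma smul_diff_coeff: "smul c m Z M - smul d m Z M = smul (c - d) m Z M"
  by (simp add: smul_def algebra_simps)

lemma even_deg_iff: "even (deg g) \<longleftrightarrow> is_beta g"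
  by (cases g) auto

lemma koszul_one:
  assumes "\<sigma> permutes {..<length vs}"
    and "\<And>p q. p < length vs \<Longrightarrow> q < length vs \<Longrightarrow> \<not> is_beta (vs ! p) \<Longrightarrow> \<not> is_beta (vs ! q) \<Longrightarrow> p = q"
  shows "koszul vs \<sigma> = 1"
proof -
  have E: "{(a, b). a < b \<and> b < length vs \<and> \<sigma> a > \<sigma> b \<and>
        odd (deg (vs ! \<sigma> a) * deg (vs ! \<sigma> b))} = {}"
  proof -
    { fix a b assume h: "a < b" "b < length vs" "\<sigma> b < \<sigma> a" "odd (deg (vs ! \<sigma> a) * deg (vs ! \<sigma> b))"
    have "\<sigma> a < length vs" "\<sigma> b < length vs"
      using h permutes_in_image[OF assms(1), of a] permutes_in_image[OF assms(1), of b] by auto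
    moreover have "\<not> is_beta (vs ! \<sigma> a)" "\<not> is_beta (vs ! \<sigma> b)"
      using h(4) by (auto simp: even_deg_iff[symmetric])
    ultimately have "\<sigma> a = \<sigma> b" using assms(2) by blast
    then have False using h by simp }
    then show ?thesis by auto
  qed
  show ?thesis unfolding koszul_def E by simp
qed

lemma concat_blocks: "concat (blocks ks xs) = take (sum_list ks) xs"
  by (induction ks arbitrary: xs) (auto simp: take_add)

lemma set_plist:
  assumes "\<sigma> permutes {..<length vs}"
  shows "set (Defs.permute_list \<sigma> vs) = set vs"
proof -
  have "set (Defs.permute_list \<sigma> vs) = (\<lambda>a. vs ! a) ` \<sigma> ` {..<length vs}"
    by (auto simp: Defs.permute_list_def)
  also have "\<sigma> ` {..<length vs} = {..<length vs}" using assms by (simp add: permutes_image)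
  finally show ?thesis by (auto simp: set_conv_nth)
qed

lemma length_plist[simp]: "length (Defs.permute_list \<sigma> vs) = length vs"
  by (simp add: Defs.permute_list_def)

lemma Phihat_zero:
  assumes "g \<in> set ws" "\<not> is_beta g"
  shows "Phihat eps_tilde ws M = 0"
  unfolding Phihat_def
proof (intro sum.neutral ballI)
  fix ks \<sigma> assume ks: "ks \<in> compositions (length ws)" and s: "\<sigma> \<in> {\<sigma>. \<sigma> permutes {..<length ws}}"
  have "g \<in> set (concat (blocks ks (Defs.permute_list \<sigma> ws)))"
    using ks s assms by (simp add: concat_blocks compositions_def set_plist)
  then obtain b where b: "b \<in> set (blocks ks (Defs.permute_list \<sigma> ws))" "g \<in> set b" by auto
  have "eps_tilde b = []" using b assms by (auto simp: eps_tilde_def)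
  then have "[] \<in> set (map eps_tilde (blocks ks (Defs.permute_list \<sigma> ws)))" using b by force
  then show "koszul ws \<sigma> / (of_nat (fact (length ks)) * of_nat (prod_list (map fact ks))) *
        coeffS (prodC (map eps_tilde (blocks ks (Defs.permute_list \<sigma> ws)))) M = 0"
    by (simp add: prodC_Nil_mem)
qed


lemma perm_pos_bij:
  "bij_betw (\<lambda>\<sigma>. map \<sigma> [0..<n]) {\<sigma>. \<sigma> permutes {..<n}} (permutations_of_set {..<n})"
proof (rule bij_betw_byWitness[where f' = "\<lambda>L a. if a < n then L ! a else a"])
  show "\<forall>\<sigma>\<in>{\<sigma>. \<sigma> permutes {..<n}}. (\<lambda>a. if a < n then map \<sigma> [0..<n] ! a else a) = \<sigma>"
  proof
    fix \<sigma> assume "\<sigma> \<in> {\<sigma>. \<sigma> permutes {..<n}}"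
    then have "\<sigma> permutes {..<n}" by simp
    then show "(\<lambda>a. if a < n then map \<sigma> [0..<n] ! a else a) = \<sigma>"
      by (auto simp: permutes_def)
  qed
  show "\<forall>L\<in>permutations_of_set {..<n}. map (\<lambda>a. if a < n then L ! a else a) [0..<n] = L"
  proof
    fix L assume "L \<in> permutations_of_set {..<n}"
    then have "length L = n" using length_finite_permutations_of_set by fastforce
    then show "map (\<lambda>a. if a < n then L ! a else a) [0..<n] = L"
      by (intro nth_equalityI) auto
  qed
  show "(\<lambda>\<sigma>. map \<sigma> [0..<n]) ` {\<sigma>. \<sigma> permutes {..<n}} \<subseteq> permutations_of_set {..<n}"
  proof safe
    fix \<sigma> assume "\<sigma> permutes {..<n}"
    then show "map \<sigma> [0..<n] \<in> permutations_of_set {..<n}"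
      by (auto simp: permutations_of_set_def distinct_map permutes_inj_on permutes_image atLeast0LessThan)
  qed
  show "(\<lambda>L a. if a < n then L ! a else a) ` permutations_of_set {..<n} \<subseteq> {\<sigma>. \<sigma> permutes {..<n}}"
  proof safe
    fix L assume L: "L \<in> permutations_of_set {..<n}"
    then have len: "length L = n" using length_finite_permutations_of_set by fastforce
    have d: "distinct L" "set L = {..<n}" using L by (auto simp: permutations_of_set_def)
    show "(\<lambda>a. if a < n then L ! a else a) permutes {..<n}"
    proof (rule bij_imp_permutes)
      show "bij_betw (\<lambda>a. if a < n then L ! a else a) {..<n} {..<n}"
        unfolding bij_betw_def
      proof
        show "inj_on (\<lambda>a. if a < n then L ! a else a) {..<n}"
          using d len by (auto simp: inj_on_def nth_eq_iff_index_eq)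
        have "(\<lambda>a. if a < n then L ! a else a) ` {..<n} = (\<lambda>a. L ! a) ` {..<length L}"
          using len by auto
        also have "\<dots> = set L" by (auto simp: set_conv_nth)
        finally show "(\<lambda>a. if a < n then L ! a else a) ` {..<n} = {..<n}" using d by simp
      qed
    qed simp
  qed
qed

lemma sum_perm_list:
  assumes "distinct L0"
  shows "(\<Sum>\<sigma>\<in>{\<sigma>. \<sigma> permutes {..<length L0}}. F (Defs.permute_list \<sigma> (map v L0)))
       = (\<Sum>L\<in>permutations_of_set (set L0). F (map v L))"
proof -
  let ?n = "length L0"
  have "(\<Sum>\<sigma>\<in>{\<sigma>. \<sigma> permutes {..<?n}}. F (Defs.permute_list \<sigma> (map v L0)))
      = (\<Sum>\<sigma>\<in>{\<sigma>. \<sigma> permutes {..<?n}}. F (map v (map ((!) L0) (map \<sigma> [0..<?n]))))"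
  proof (intro sum.cong refl arg_cong[where f=F])
    fix \<sigma> assume "\<sigma> \<in> {\<sigma>. \<sigma> permutes {..<?n}}"
    then have "\<And>a. a < ?n \<Longrightarrow> \<sigma> a < ?n" using permutes_in_image by fastforce
    then show "Defs.permute_list \<sigma> (map v L0) = map v (map ((!) L0) (map \<sigma> [0..<?n]))"
      by (simp add: Defs.permute_list_def)
  qed
  also have "\<dots> = (\<Sum>L\<in>permutations_of_set {..<?n}. F (map v (map ((!) L0) L)))"
    using sum.reindex_bij_betw[OF perm_pos_bij[of ?n], of "\<lambda>L. F (map v (map ((!) L0) L))"] by simp
  also have "\<dots> = (\<Sum>L\<in>map ((!) L0) ` permutations_of_set {..<?n}. F (map v L))"
  proof (rule sum.reindex[symmetric, unfolded comp_def])
    have inj: "inj_on ((!) L0) {..<?n}" using assms by (auto simp: inj_on_def nth_eq_iff_index_eq)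
    show "inj_on (map ((!) L0)) (permutations_of_set {..<?n})"
    proof (rule inj_onI)
      fix x y assume "x \<in> permutations_of_set {..<?n}" "y \<in> permutations_of_set {..<?n}"
        "map ((!) L0) x = map ((!) L0) y"
      then show "x = y" using inj
        by (metis map_inj_on permutations_of_setD(1) sup.idem)
    qed
  qed
  also have "map ((!) L0) ` permutations_of_set {..<?n} = permutations_of_set (((!) L0) ` {..<?n})"
    using assms by (subst permutations_of_set_image_inj) (auto simp: inj_on_def nth_eq_iff_index_eq)
  also have "((!) L0) ` {..<?n} = set L0" by (auto simp: set_conv_nth)
  finally show ?thesis .
qed

lemma pos_split:
  assumes "finite X" "k \<le> card X"
  shows "(\<Sum>L\<in>permutations_of_set X. F (take k L) (drop k L))
       = (\<Sum>A\<in>{A. A \<subseteq> X \<and> card A = k}. \<Sum>L1\<in>permutations_of_set A.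
            \<Sum>L2\<in>permutations_of_set (X - A). F L1 L2)"
proof -
  let ?S = "SIGMA A:{A. A \<subseteq> X \<and> card A = k}. permutations_of_set A \<times> permutations_of_set (X - A)"
  have fin: "finite {A. A \<subseteq> X \<and> card A = k}" using assms by simp
  have "(\<Sum>A\<in>{A. A \<subseteq> X \<and> card A = k}. \<Sum>L1\<in>permutations_of_set A.
            \<Sum>L2\<in>permutations_of_set (X - A). F L1 L2)
      = (\<Sum>A\<in>{A. A \<subseteq> X \<and> card A = k}. \<Sum>p\<in>permutations_of_set A \<times> permutations_of_set (X - A). F (fst p) (snd p))"
    by (subst sum.cartesian_product) (simp add: case_prod_unfold)
  also have "\<dots> = (\<Sum>q\<in>?S. F (fst (snd q)) (snd (snd q)))"
    using fin by (subst sum.Sigma) (auto simp: case_prod_unfold)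
  also have "\<dots> = (\<Sum>L\<in>permutations_of_set X. F (take k L) (drop k L))"
  proof (rule sum.reindex_bij_witness[where i = "\<lambda>L. (set (take k L), take k L, drop k L)"
        and j = "\<lambda>q. fst (snd q) @ snd (snd q)"])
    fix q assume q: "q \<in> ?S"
    obtain A L1 L2 where qq: "q = (A, L1, L2)" by (cases q) auto
    have h: "A \<subseteq> X" "card A = k" "set L1 = A" "distinct L1" "set L2 = X - A" "distinct L2"
      using q qq by (auto simp: permutations_of_set_def)
    have len: "length L1 = k" using h distinct_card by fastforce
    show "(set (take k (fst (snd q) @ snd (snd q))), take k (fst (snd q) @ snd (snd q)),
            drop k (fst (snd q) @ snd (snd q))) = q"
      using qq len h by simp
    show "fst (snd q) @ snd (snd q) \<in> permutations_of_set X"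
      using qq h by (auto simp: permutations_of_set_def)
    show "F (take k (fst (snd q) @ snd (snd q))) (drop k (fst (snd q) @ snd (snd q)))
         = F (fst (snd q)) (snd (snd q))" using qq len h by simp
  next
    fix L assume L: "L \<in> permutations_of_set X"
    then have d: "distinct L" "set L = X" by (auto simp: permutations_of_set_def)
    have len: "length L = card X" using L length_finite_permutations_of_set by fastforce
    show "fst (snd (set (take k L), take k L, drop k L)) @ snd (snd (set (take k L), take k L, drop k L)) = L"
      by simp
    have dd: "distinct (take k L)" "distinct (drop k L)" "set (take k L) \<inter> set (drop k L) = {}"
      using d distinct_append[of "take k L" "drop k L"] by auto
    have u: "set (take k L) \<union> set (drop k L) = X" using d set_append[of "take k L" "drop k L"] by simp
    have "card (set (take k L)) = k" using dd len assms by (simp add: distinct_card)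
    then show "(set (take k L), take k L, drop k L) \<in> ?S"
      using dd u by (auto simp: permutations_of_set_def)
  qed
  finally show ?thesis by simp
qed


definition ec :: "(nat \<Rightarrow> gen) \<Rightarrow> nat set \<Rightarrow> rat" where
  "ec v A = 1 / (of_nat (fact (\<Sum>j\<in>A. idx1 (v j))) * of_nat (fact (\<Sum>j\<in>A. idx2 (v j))))"

definition em :: "(nat \<Rightarrow> gen) \<Rightarrow> nat set \<Rightarrow> nat" where
  "em v A = (\<Sum>j\<in>A. idx1 (v j) + idx2 (v j)) + card A - 1"

lemma eps_map:
  assumes "distinct L" "L \<noteq> []" "\<forall>j\<in>set L. is_beta (v j)"
  shows "eps_tilde (map v L) = [(ec v (set L), em v (set L))]"
proof -
  have "sum_list (map idx1 (map v L)) = (\<Sum>j\<in>set L. idx1 (v j))"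
    using assms(1) by (simp add: sum_list_distinct_conv_sum_set)
  moreover have "sum_list (map idx2 (map v L)) = (\<Sum>j\<in>set L. idx2 (v j))"
    using assms(1) by (simp add: sum_list_distinct_conv_sum_set)
  moreover have "sum_list (map (\<lambda>g. idx1 g + idx2 g) (map v L)) = (\<Sum>j\<in>set L. idx1 (v j) + idx2 (v j))"
    using assms(1) by (simp add: sum_list_distinct_conv_sum_set)
  moreover have "length L = card (set L)" using assms(1) by (simp add: distinct_card)
  ultimately show ?thesis using assms by (simp add: eps_tilde_def ec_def em_def)
qed

definition G :: "nat list \<Rightarrow> gen list \<Rightarrow> nat multiset \<Rightarrow> rat" where
  "G ks xs M = coeffS (prodC (map eps_tilde (blocks ks xs))) M"

definition W :: "(nat \<Rightarrow> gen) \<Rightarrow> nat list \<Rightarrow> nat set \<Rightarrow> nat multiset \<Rightarrow> rat" where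
  "W v ks X M = (\<Sum>L\<in>permutations_of_set X. G ks (map v L) M)"

lemma W_Cons:
  assumes X: "finite X" "1 \<le> k" "k \<le> card X" "\<forall>j\<in>X. is_beta (v j)"
  shows "W v (k # ks) X M = (\<Sum>A\<in>{A. A \<subseteq> X \<and> card A = k}.
            of_nat (fact k) * smul (ec v A) (em v A) (W v ks (X - A)) M)"
proof -
  have "W v (k # ks) X M = (\<Sum>L\<in>permutations_of_set X.
      (\<lambda>L1 L2. smul (ec v (set L1)) (em v (set L1)) (G ks (map v L2)) M) (take k L) (drop k L))"
    unfolding W_def
  proof (intro sum.cong refl)
    fix L assume L: "L \<in> permutations_of_set X"
    then have d: "distinct L" "set L = X" by (auto simp: permutations_of_set_def)
    have len: "length L = card X" using L length_finite_permutations_of_set by fastforce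
    have "take k L \<noteq> []" using len X by auto
    moreover have "distinct (take k L)" using d by simp
    moreover have "\<forall>j\<in>set (take k L). is_beta (v j)" using d X by (auto dest: in_set_takeD)
    ultimately have e: "eps_tilde (map v (take k L)) = [(ec v (set (take k L)), em v (set (take k L)))]"
      by (simp add: eps_map)
    show "G (k # ks) (map v L) M = smul (ec v (set (take k L))) (em v (set (take k L))) (G ks (map v (drop k L))) M"
      by (simp add: G_def[abs_def] take_map drop_map e coeffS_map_add)
  qed
  also have "\<dots> = (\<Sum>A\<in>{A. A \<subseteq> X \<and> card A = k}. \<Sum>L1\<in>permutations_of_set A.
            \<Sum>L2\<in>permutations_of_set (X - A). smul (ec v (set L1)) (em v (set L1)) (G ks (map v L2)) M)"
    by (rule pos_split[OF X(1) X(3)])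
  also have "\<dots> = (\<Sum>A\<in>{A. A \<subseteq> X \<and> card A = k}.
            of_nat (fact k) * smul (ec v A) (em v A) (W v ks (X - A)) M)"
  proof (intro sum.cong refl)
    fix A assume A: "A \<in> {A. A \<subseteq> X \<and> card A = k}"
    then have fA: "finite A" using X(1) finite_subset by blast
    have "(\<Sum>L1\<in>permutations_of_set A. \<Sum>L2\<in>permutations_of_set (X - A).
              smul (ec v (set L1)) (em v (set L1)) (G ks (map v L2)) M)
        = (\<Sum>L1\<in>permutations_of_set A. smul (ec v A) (em v A) (W v ks (X - A)) M)"
    proof (intro sum.cong refl)
      fix L1 assume "L1 \<in> permutations_of_set A"
      then have "set L1 = A" by (simp add: permutations_of_set_def)
      then show "(\<Sum>L2\<in>permutations_of_set (X - A). smul (ec v (set L1)) (em v (set L1)) (G ks (map v L2)) M)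
          = smul (ec v A) (em v A) (W v ks (X - A)) M"
        by (simp add: sum_smul W_def[abs_def])
    qed
    also have "\<dots> = of_nat (fact k) * smul (ec v A) (em v A) (W v ks (X - A)) M"
      using A fA by simp
    finally show "(\<Sum>L1\<in>permutations_of_set A. \<Sum>L2\<in>permutations_of_set (X - A).
              smul (ec v (set L1)) (em v (set L1)) (G ks (map v L2)) M)
        = of_nat (fact k) * smul (ec v A) (em v A) (W v ks (X - A)) M" .
  qed
  finally show ?thesis .
qed

lemma length_le_sum_list: "\<forall>x\<in>set ks. 1 \<le> x \<Longrightarrow> length ks \<le> sum_list (ks :: nat list)"
  by (induction ks) auto

lemma finite_compositions: "finite (compositions n)"
proof -
  have "compositions n \<subseteq> {ks. set ks \<subseteq> {..n} \<and> length ks \<le> n}"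
  proof
    fix ks assume "ks \<in> compositions n"
    then have h: "sum_list ks = n" "\<forall>x\<in>set ks. 1 \<le> x" by (auto simp: compositions_def)
    have "set ks \<subseteq> {..n}" using h member_le_sum_list[of _ ks] by fastforce
    moreover have "length ks \<le> n" using length_le_sum_list[OF h(2)] h(1) by simp
    ultimately show "ks \<in> {ks. set ks \<subseteq> {..n} \<and> length ks \<le> n}" by simp
  qed
  then show ?thesis using finite_lists_length_le[of "{..n}" n] finite_subset by blast
qed

definition CS :: "nat \<Rightarrow> nat \<Rightarrow> nat list set" where
  "CS n s = {ks \<in> compositions n. length ks = s}"

lemma finite_CS: "finite (CS n s)"
  unfolding CS_def using finite_compositions by simp

lemma sum_CS_Suc:
  "(\<Sum>ks\<in>CS n (Suc s). f ks) = (\<Sum>k\<in>{1..n}. \<Sum>ks\<in>CS (n - k) s. f (k # ks))"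
proof -
  have "(\<Sum>k\<in>{1..n}. \<Sum>ks\<in>CS (n - k) s. f (k # ks)) = (\<Sum>p\<in>(SIGMA k:{1..n}. CS (n - k) s). f (fst p # snd p))"
    by (subst sum.Sigma) (auto simp: finite_CS case_prod_unfold)
  also have "\<dots> = (\<Sum>ks\<in>CS n (Suc s). f ks)"
  proof (rule sum.reindex_bij_witness[where i = "\<lambda>ks. (hd ks, tl ks)" and j = "\<lambda>p. fst p # snd p"])
    fix p assume "p \<in> (SIGMA k:{1..n}. CS (n - k) s)"
    then show "(hd (fst p # snd p), tl (fst p # snd p)) = p" by auto
    from \<open>p \<in> _\<close> show "fst p # snd p \<in> CS n (Suc s)"
      by (auto simp: CS_def compositions_def)
    show "f (fst p # snd p) = f (fst p # snd p)" by simp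
  next
    fix ks assume ks: "ks \<in> CS n (Suc s)"
    then obtain k ks' where kk: "ks = k # ks'" by (cases ks) (auto simp: CS_def)
    show "fst (hd ks, tl ks) # snd (hd ks, tl ks) = ks" using kk by simp
    show "(hd ks, tl ks) \<in> (SIGMA k:{1..n}. CS (n - k) s)"
      using ks kk by (auto simp: CS_def compositions_def)
  qed
  finally show ?thesis ..
qed

definition Ord :: "(nat \<Rightarrow> gen) \<Rightarrow> nat \<Rightarrow> nat set \<Rightarrow> nat multiset \<Rightarrow> rat" where
  "Ord v s X M = (\<Sum>ks\<in>CS (card X) s. W v ks X M / of_nat (prod_list (map fact ks)))"

lemma sum_subsets_by_card:
  assumes "finite X"
  shows "(\<Sum>A\<in>{A. A \<subseteq> X \<and> A \<noteq> {}}. h A) = (\<Sum>k\<in>{1..card X}. \<Sum>A\<in>{A. A \<subseteq> X \<and> card A = k}. h A)"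
proof -
  have eq: "{A. A \<subseteq> X \<and> A \<noteq> {}} = (\<Union>k\<in>{1..card X}. {A. A \<subseteq> X \<and> card A = k})"
  proof (rule set_eqI, rule iffI)
    fix A assume "A \<in> {A. A \<subseteq> X \<and> A \<noteq> {}}"
    then have AX: "A \<subseteq> X" "A \<noteq> {}" by auto
    moreover have "finite A" using AX assms finite_subset by blast
    ultimately have "card A \<in> {1..card X}" using assms by (simp add: card_mono Suc_le_eq card_gt_0_iff)
    then show "A \<in> (\<Union>k\<in>{1..card X}. {A. A \<subseteq> X \<and> card A = k})" using AX by blast
  next
    fix A assume "A \<in> (\<Union>k\<in>{1..card X}. {A. A \<subseteq> X \<and> card A = k})"
    then show "A \<in> {A. A \<subseteq> X \<and> A \<noteq> {}}" by force
  qed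
  show ?thesis unfolding eq
    by (rule sum.UNION_disjoint) (auto simp: assms)
qed

lemma Ord_Suc:
  assumes X: "finite X" "\<forall>j\<in>X. is_beta (v j)"
  shows "Ord v (Suc s) X M = (\<Sum>A\<in>{A. A \<subseteq> X \<and> A \<noteq> {}}. smul (ec v A) (em v A) (Ord v s (X - A)) M)"
proof -
  let ?n = "card X"
  have "Ord v (Suc s) X M = (\<Sum>k\<in>{1..?n}. \<Sum>ks\<in>CS (?n - k) s.
      W v (k # ks) X M / (of_nat (fact k) * of_nat (prod_list (map fact ks))))"
    unfolding Ord_def sum_CS_Suc by simp
  also have "\<dots> = (\<Sum>k\<in>{1..?n}. \<Sum>ks\<in>CS (?n - k) s. \<Sum>A\<in>{A. A \<subseteq> X \<and> card A = k}.
      smul (ec v A) (em v A) (\<lambda>M. W v ks (X - A) M / of_nat (prod_list (map fact ks))) M)"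
  proof (intro sum.cong refl)
    fix k ks assume k: "k \<in> {1..?n}"
    show "W v (k # ks) X M / (of_nat (fact k) * of_nat (prod_list (map fact ks))) =
          (\<Sum>A\<in>{A. A \<subseteq> X \<and> card A = k}.
            smul (ec v A) (em v A) (\<lambda>M. W v ks (X - A) M / of_nat (prod_list (map fact ks))) M)"
      using k X
      apply (simp add: W_Cons sum_divide_distrib)
      apply (intro sum.cong refl)
      apply (simp add: smul_def)
      done
  qed
  also have "\<dots> = (\<Sum>k\<in>{1..?n}. \<Sum>A\<in>{A. A \<subseteq> X \<and> card A = k}. \<Sum>ks\<in>CS (?n - k) s.
      smul (ec v A) (em v A) (\<lambda>M. W v ks (X - A) M / of_nat (prod_list (map fact ks))) M)"
    by (intro sum.cong refl sum.swap)
  also have "\<dots> = (\<Sum>k\<in>{1..?n}. \<Sum>A\<in>{A. A \<subseteq> X \<and> card A = k}. smul (ec v A) (em v A) (Ord v s (X - A)) M)"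
  proof (intro sum.cong refl)
    fix k A assume k: "k \<in> {1..?n}" and A: "A \<in> {A. A \<subseteq> X \<and> card A = k}"
    have fA: "finite A" using A X(1) finite_subset by blast
    have "card (X - A) = ?n - k" using A fA by (simp add: card_Diff_subset)
    then show "(\<Sum>ks\<in>CS (?n - k) s.
      smul (ec v A) (em v A) (\<lambda>M. W v ks (X - A) M / of_nat (prod_list (map fact ks))) M)
        = smul (ec v A) (em v A) (Ord v s (X - A)) M"
      by (simp add: sum_smul Ord_def[abs_def])
  qed
  also have "\<dots> = (\<Sum>A\<in>{A. A \<subseteq> X \<and> A \<noteq> {}}. smul (ec v A) (em v A) (Ord v s (X - A)) M)"
    by (rule sum_subsets_by_card[OF X(1), symmetric])
  finally show ?thesis .
qed

lemma Ord_0_nonempty: "finite X \<Longrightarrow> X \<noteq> {} \<Longrightarrow> Ord v 0 X M = 0"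
proof -
  assume "finite X" "X \<noteq> {}"
  then have "CS (card X) 0 = {}" by (auto simp: CS_def compositions_def)
  then show ?thesis by (simp add: Ord_def)
qed

lemma Ord_big: "card X < s \<Longrightarrow> Ord v s X M = 0"
proof -
  assume "card X < s"
  then have "CS (card X) s = {}" using length_le_sum_list by (fastforce simp: CS_def compositions_def)
  then show ?thesis by (simp add: Ord_def)
qed


lemma compositions_by_length:
  "(\<Sum>ks\<in>compositions n. f ks) = (\<Sum>s\<le>n. \<Sum>ks\<in>CS n s. f ks)"
proof -
  have eq: "compositions n = (\<Union>s\<in>{..n}. CS n s)"
    using length_le_sum_list by (auto simp: CS_def compositions_def)
  show ?thesis unfolding eq
    by (rule sum.UNION_disjoint) (auto simp: finite_CS[unfolded CS_def] CS_def)
qed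

lemma Phihat_rep:
  assumes L: "distinct L" "\<forall>j\<in>set L. is_beta (v j)"
  shows "Phihat eps_tilde (map v L) M = (\<Sum>s\<le>length L. Ord v s (set L) M / of_nat (fact s))"
proof -
  let ?n = "length L"
  have "Phihat eps_tilde (map v L) M = (\<Sum>ks\<in>compositions ?n.
          1 / (of_nat (fact (length ks)) * of_nat (prod_list (map fact ks))) *
          (\<Sum>\<sigma>\<in>{\<sigma>. \<sigma> permutes {..<?n}}. G ks (Defs.permute_list \<sigma> (map v L)) M))"
    unfolding Phihat_def length_map
  proof (intro sum.cong refl)
    fix ks
    show "(\<Sum>\<sigma>\<in>{\<sigma>. \<sigma> permutes {..<?n}}. koszul (map v L) \<sigma> / (of_nat (fact (length ks)) * of_nat (prod_list (map fact ks))) *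
        coeffS (prodC (map eps_tilde (blocks ks (Defs.permute_list \<sigma> (map v L))))) M) =
        1 / (of_nat (fact (length ks)) * of_nat (prod_list (map fact ks))) *
          (\<Sum>\<sigma>\<in>{\<sigma>. \<sigma> permutes {..<?n}}. G ks (Defs.permute_list \<sigma> (map v L)) M)"
      unfolding sum_distrib_left
    proof (intro sum.cong refl)
      fix \<sigma> assume "\<sigma> \<in> {\<sigma>. \<sigma> permutes {..<?n}}"
      then have "koszul (map v L) \<sigma> = 1"
        by (intro koszul_one) (use L in auto)
      then show "koszul (map v L) \<sigma> / (of_nat (fact (length ks)) * of_nat (prod_list (map fact ks))) *
          coeffS (prodC (map eps_tilde (blocks ks (Defs.permute_list \<sigma> (map v L))))) M =
          1 / (of_nat (fact (length ks)) * of_nat (prod_list (map fact ks))) * G ks (Defs.permute_list \<sigma> (map v L)) M"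
        by (simp add: G_def)
    qed
  qed
  also have "\<dots> = (\<Sum>ks\<in>compositions ?n.
          1 / (of_nat (fact (length ks)) * of_nat (prod_list (map fact ks))) * W v ks (set L) M)"
  proof (intro sum.cong refl)
    fix ks
    show "1 / (of_nat (fact (length ks)) * of_nat (prod_list (map fact ks))) *
          (\<Sum>\<sigma>\<in>{\<sigma>. \<sigma> permutes {..<?n}}. G ks (Defs.permute_list \<sigma> (map v L)) M) =
          1 / (of_nat (fact (length ks)) * of_nat (prod_list (map fact ks))) * W v ks (set L) M"
      using sum_perm_list[OF L(1), of "\<lambda>xs. G ks xs M" v] by (simp add: W_def)
  qed
  also have "\<dots> = (\<Sum>s\<le>?n. \<Sum>ks\<in>CS ?n s.
          1 / (of_nat (fact (length ks)) * of_nat (prod_list (map fact ks))) * W v ks (set L) M)"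
    by (rule compositions_by_length)
  also have "\<dots> = (\<Sum>s\<le>?n. Ord v s (set L) M / of_nat (fact s))"
  proof (intro sum.cong refl)
    fix s
    have c: "card (set L) = ?n" using L(1) by (simp add: distinct_card)
    show "(\<Sum>ks\<in>CS ?n s. 1 / (of_nat (fact (length ks)) * of_nat (prod_list (map fact ks))) * W v ks (set L) M)
        = Ord v s (set L) M / of_nat (fact s)"
      unfolding Ord_def c sum_divide_distrib
      by (intro sum.cong refl) (simp add: CS_def)
  qed
  finally show ?thesis .
qed

definition Phi :: "(nat \<Rightarrow> gen) \<Rightarrow> nat set \<Rightarrow> nat \<Rightarrow> nat multiset \<Rightarrow> rat" where
  "Phi v X n M = (\<Sum>s\<le>n. Ord v s X M / of_nat (fact s))"

lemma Phi_extend: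
  assumes "card X \<le> n" "card X \<le> n'"
  shows "Phi v X n M = Phi v X n' M"
proof -
  have *: "Phi v X n M = Phi v X (card X) M" if "card X \<le> n" for n
  proof -
    have e: "{..n} = {..card X} \<union> {card X<..n}" using that by auto
    have "Phi v X n M = Phi v X (card X) M + (\<Sum>s\<in>{card X<..n}. Ord v s X M / of_nat (fact s))"
      unfolding Phi_def e by (subst sum.union_disjoint) auto
    also have "(\<Sum>s\<in>{card X<..n}. Ord v s X M / of_nat (fact s)) = 0"
      by (intro sum.neutral) (auto simp: Ord_big)
    finally show ?thesis by simp
  qed
  show ?thesis using *[OF assms(1)] *[OF assms(2)] by simp
qed


lemma Ord_cong: "(\<And>j. j \<in> X \<Longrightarrow> v j = v' j) \<Longrightarrow> Ord v s X M = Ord v' s X M"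
proof -
  assume h: "\<And>j. j \<in> X \<Longrightarrow> v j = v' j"
  have "\<And>ks. W v ks X M = W v' ks X M"
    unfolding W_def
  proof (intro sum.cong refl)
    fix ks L assume "L \<in> permutations_of_set X"
    then have "set L = X" by (simp add: permutations_of_set_def)
    then have "map v L = map v' L" unfolding map_eq_conv using h by blast
    then show "G ks (map v L) M = G ks (map v' L) M" by (simp only:)
  qed
  then show ?thesis by (simp add: Ord_def)
qed

lemma ec_cong: "(\<And>j. j \<in> X \<Longrightarrow> v j = v' j) \<Longrightarrow> ec v X = ec v' X"
proof -
  assume h: "\<And>j. j \<in> X \<Longrightarrow> v j = v' j"
  have "(\<Sum>j\<in>X. idx1 (v j)) = (\<Sum>j\<in>X. idx1 (v' j))" "(\<Sum>j\<in>X. idx2 (v j)) = (\<Sum>j\<in>X. idx2 (v' j))"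
    using h by (auto intro!: sum.cong)
  then show ?thesis by (simp add: ec_def)
qed

lemma em_cong: "(\<And>j. j \<in> X \<Longrightarrow> v j = v' j) \<Longrightarrow> em v X = em v' X"
proof -
  assume h: "\<And>j. j \<in> X \<Longrightarrow> v j = v' j"
  have "(\<Sum>j\<in>X. idx1 (v j) + idx2 (v j)) = (\<Sum>j\<in>X. idx1 (v' j) + idx2 (v' j))"
    using h by (auto intro!: sum.cong)
  then show ?thesis by (simp add: em_def)
qed

lemma ec_ins:
  assumes "finite T" "z \<notin> T"
  shows "ec (v(z := Beta x1 x2)) (insert z T) =
     1 / (of_nat (fact (x1 + (\<Sum>j\<in>T. idx1 (v j)))) * of_nat (fact (x2 + (\<Sum>j\<in>T. idx2 (v j)))))"
proof -
  have "(\<Sum>j\<in>T. idx1 ((v(z := Beta x1 x2)) j)) = (\<Sum>j\<in>T. idx1 (v j))"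
       "(\<Sum>j\<in>T. idx2 ((v(z := Beta x1 x2)) j)) = (\<Sum>j\<in>T. idx2 (v j))"
    using assms by (auto intro!: sum.cong)
  then show ?thesis using assms by (simp add: ec_def)
qed

lemma em_ins:
  assumes "finite T" "z \<notin> T"
  shows "em (v(z := Beta x1 x2)) (insert z T) = x1 + x2 + (\<Sum>j\<in>T. idx1 (v j) + idx2 (v j)) + card T"
proof -
  have "(\<Sum>j\<in>T. idx1 ((v(z := Beta x1 x2)) j) + idx2 ((v(z := Beta x1 x2)) j)) = (\<Sum>j\<in>T. idx1 (v j) + idx2 (v j))"
    using assms by (auto intro!: sum.cong)
  then show ?thesis using assms by (simp add: em_def)
qed

definition OZ :: "(nat \<Rightarrow> gen) \<Rightarrow> nat \<Rightarrow> gen \<Rightarrow> nat \<Rightarrow> nat set \<Rightarrow> nat multiset \<Rightarrow> rat" where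
  "OZ v z y s Y M = Ord (v(z := y)) s (insert z Y) M"

lemma Ord_split:
  assumes Y: "finite Y" "z \<notin> Y" "\<forall>j\<in>Y. is_beta (v j)" "is_beta y"
  shows "OZ v z y (Suc s) Y M =
     (\<Sum>T\<in>Pow Y. smul (ec (v(z:=y)) (insert z T)) (em (v(z:=y)) (insert z T)) (Ord v s (Y - T)) M)
   + (\<Sum>A\<in>{A. A \<subseteq> Y \<and> A \<noteq> {}}. smul (ec v A) (em v A) (OZ v z y s (Y - A)) M)"
proof -
  let ?v = "v(z := y)"
  have b: "\<forall>j\<in>insert z Y. is_beta (?v j)" using Y by auto
  have eq: "{A. A \<subseteq> insert z Y \<and> A \<noteq> {}} = insert z ` Pow Y \<union> {A. A \<subseteq> Y \<and> A \<noteq> {}}"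
  proof (rule set_eqI, rule iffI)
    fix A assume "A \<in> {A. A \<subseteq> insert z Y \<and> A \<noteq> {}}"
    then have A: "A \<subseteq> insert z Y" "A \<noteq> {}" by auto
    show "A \<in> insert z ` Pow Y \<union> {A. A \<subseteq> Y \<and> A \<noteq> {}}"
    proof (cases "z \<in> A")
      case True
      then have "A = insert z (A - {z})" by auto
      moreover have "A - {z} \<in> Pow Y" using A by auto
      ultimately show ?thesis by blast
    next
      case False
      then show ?thesis using A by auto
    qed
  qed auto
  have disj: "insert z ` Pow Y \<inter> {A. A \<subseteq> Y \<and> A \<noteq> {}} = {}" using Y by auto
  have inj: "inj_on (insert z) (Pow Y)"
  proof (rule inj_onI)
    fix T1 T2 assume "T1 \<in> Pow Y" "T2 \<in> Pow Y" "insert z T1 = insert z T2"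
    then show "T1 = T2" using Y(2) by (metis Pow_iff insert_ident subset_iff)
  qed
  have fin: "finite (insert z ` Pow Y)" "finite {A. A \<subseteq> Y \<and> A \<noteq> {}}" using Y by auto
  have "OZ v z y (Suc s) Y M = (\<Sum>A\<in>{A. A \<subseteq> insert z Y \<and> A \<noteq> {}}.
      smul (ec ?v A) (em ?v A) (Ord ?v s (insert z Y - A)) M)"
    unfolding OZ_def using Y by (intro Ord_Suc) (auto simp: b)
  also have "\<dots> = (\<Sum>A\<in>insert z ` Pow Y. smul (ec ?v A) (em ?v A) (Ord ?v s (insert z Y - A)) M)
      + (\<Sum>A\<in>{A. A \<subseteq> Y \<and> A \<noteq> {}}. smul (ec ?v A) (em ?v A) (Ord ?v s (insert z Y - A)) M)"
    unfolding eq by (rule sum.union_disjoint[OF fin disj])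
  also have "(\<Sum>A\<in>insert z ` Pow Y. smul (ec ?v A) (em ?v A) (Ord ?v s (insert z Y - A)) M)
      = (\<Sum>T\<in>Pow Y. smul (ec ?v (insert z T)) (em ?v (insert z T)) (Ord v s (Y - T)) M)"
    unfolding sum.reindex[OF inj] comp_def
  proof (intro sum.cong refl smul_cong)
    fix T M' assume "T \<in> Pow Y"
    then have e: "insert z Y - insert z T = Y - T" using Y by auto
    show "Ord ?v s (insert z Y - insert z T) M' = Ord v s (Y - T) M'"
      unfolding e using Y by (intro Ord_cong) auto
  qed
  also have "(\<Sum>A\<in>{A. A \<subseteq> Y \<and> A \<noteq> {}}. smul (ec ?v A) (em ?v A) (Ord ?v s (insert z Y - A)) M)
      = (\<Sum>A\<in>{A. A \<subseteq> Y \<and> A \<noteq> {}}. smul (ec v A) (em v A) (OZ v z y s (Y - A)) M)"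
  proof (intro sum.cong refl)
    fix A assume A: "A \<in> {A. A \<subseteq> Y \<and> A \<noteq> {}}"
    then have zA: "z \<notin> A" using Y by auto
    have "ec ?v A = ec v A" "em ?v A = em v A" using zA by (auto intro!: ec_cong em_cong)
    moreover have "insert z Y - A = insert z (Y - A)" using zA by auto
    ultimately show "smul (ec ?v A) (em ?v A) (Ord ?v s (insert z Y - A)) M = smul (ec v A) (em v A) (OZ v z y s (Y - A)) M"
      by (simp add: OZ_def[abs_def])
  qed
  finally show ?thesis .
qed

lemma coeff_id:
  fixes a b I J :: nat
  assumes "1 \<le> a" "1 \<le> b"
  shows "of_nat b / (of_nat (fact (a - 1 + I)) * of_nat (fact (b + J)))
       - of_nat a / (of_nat (fact (a + I)) * of_nat (fact (b - 1 + J)))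
       + of_int (int a * int J - int b * int I) / (of_nat (fact (a + I)) * of_nat (fact (b + J))) = (0::rat)"
proof -
  obtain a' b' where ab: "a = Suc a'" "b = Suc b'" using assms by (metis Suc_le_D One_nat_def)
  have fa: "(of_nat (fact (a + I)) :: rat) = of_nat (a + I) * of_nat (fact (a - 1 + I))"
    using ab by (simp add: fact_Suc algebra_simps)
  have fb: "(of_nat (fact (b + J)) :: rat) = of_nat (b + J) * of_nat (fact (b - 1 + J))"
    using ab by (simp add: fact_Suc algebra_simps)
  have p1: "(of_nat (fact (a - 1 + I)) :: rat) \<noteq> 0" "(of_nat (fact (b - 1 + J)) :: rat) \<noteq> 0" by auto
  have p2: "(of_nat (a + I) :: rat) \<noteq> 0" "(of_nat (b + J) :: rat) \<noteq> 0" using ab by auto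
  have key: "\<And>FA FB x y p q r. FA \<noteq> 0 \<Longrightarrow> FB \<noteq> 0 \<Longrightarrow> x \<noteq> 0 \<Longrightarrow> y \<noteq> 0 \<Longrightarrow>
     (p::rat) / (FA * (y * FB)) - q / ((x * FA) * FB) + r / ((x * FA) * (y * FB)) = (p * x - q * y + r) / (x * y * FA * FB)"
    by (simp add: field_simps)
  have num: "of_nat b * of_nat (a + I) - of_nat a * of_nat (b + J) + of_int (int a * int J - int b * int I) = (0::rat)"
    by (simp add: algebra_simps)
  show ?thesis unfolding fa fb key[OF p1(1) p1(2) p2(1) p2(2)] num by simp
qed


definition cc :: "nat \<Rightarrow> nat \<Rightarrow> (nat \<Rightarrow> gen) \<Rightarrow> nat \<Rightarrow> rat" where
  "cc a b v t = of_int (int a * int (idx2 (v t)) - int b * int (idx1 (v t)))"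

definition nb :: "nat \<Rightarrow> nat \<Rightarrow> (nat \<Rightarrow> gen) \<Rightarrow> nat \<Rightarrow> gen" where
  "nb a b v t = Beta (a + idx1 (v t)) (b + idx2 (v t))"

definition Dsum :: "nat \<Rightarrow> nat \<Rightarrow> (nat \<Rightarrow> gen) \<Rightarrow> nat \<Rightarrow> nat \<Rightarrow> nat set \<Rightarrow> nat multiset \<Rightarrow> rat" where
  "Dsum a b v z s Y M = of_nat b * OZ v z (Beta (a - 1) b) s Y M - of_nat a * OZ v z (Beta a (b - 1)) s Y M
     + (\<Sum>t\<in>Y. cc a b v t * OZ v z (nb a b v t) s (Y - {t}) M)"

lemma sum_cc: "finite S \<Longrightarrow> (\<Sum>t\<in>S. cc a b v t) =
   of_nat a * of_nat (\<Sum>j\<in>S. idx2 (v j)) - of_nat b * of_nat (\<Sum>j\<in>S. idx1 (v j))"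
  by (simp add: cc_def of_nat_sum sum_subtractf sum_distrib_left)

lemma part1_zero:
  assumes Y: "finite Y" "z \<notin> Y" and ab: "1 \<le> a" "1 \<le> b"
  shows "of_nat b * (\<Sum>T\<in>Pow Y. smul (ec (v(z := Beta (a - 1) b)) (insert z T)) (em (v(z := Beta (a - 1) b)) (insert z T)) (Ord v s (Y - T)) M)
       - of_nat a * (\<Sum>T\<in>Pow Y. smul (ec (v(z := Beta a (b - 1))) (insert z T)) (em (v(z := Beta a (b - 1))) (insert z T)) (Ord v s (Y - T)) M)
       + (\<Sum>t\<in>Y. cc a b v t * (\<Sum>T\<in>Pow (Y - {t}). smul (ec (v(z := nb a b v t)) (insert z T)) (em (v(z := nb a b v t)) (insert z T)) (Ord v s (Y - {t} - T)) M)) = 0"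
proof -
  define I where "I S = (\<Sum>j\<in>S. idx1 (v j))" for S
  define J where "J S = (\<Sum>j\<in>S. idx2 (v j))" for S
  define K where "K S = (\<Sum>j\<in>S. idx1 (v j) + idx2 (v j))" for S
  define emS where "emS S = a - 1 + b + K S + card S" for S
  define ec1 where "ec1 S = (1::rat) / (of_nat (fact (a - 1 + I S)) * of_nat (fact (b + J S)))" for S
  define ec2 where "ec2 S = (1::rat) / (of_nat (fact (a + I S)) * of_nat (fact (b - 1 + J S)))" for S
  define ec3 where "ec3 S = (1::rat) / (of_nat (fact (a + I S)) * of_nat (fact (b + J S)))" for S
  have finT: "\<And>T. T \<in> Pow Y \<Longrightarrow> finite T \<and> z \<notin> T" using Y finite_subset by blast
  have s1: "of_nat b * (\<Sum>T\<in>Pow Y. smul (ec (v(z := Beta (a - 1) b)) (insert z T)) (em (v(z := Beta (a - 1) b)) (insert z T)) (Ord v s (Y - T)) M)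
      = (\<Sum>S\<in>Pow Y. smul (of_nat b * ec1 S) (emS S) (Ord v s (Y - S)) M)"
    unfolding sum_distrib_left
  proof (intro sum.cong refl)
    fix T assume "T \<in> Pow Y"
    with finT have f: "finite T" "z \<notin> T" by auto
    show "of_nat b * smul (ec (v(z := Beta (a - 1) b)) (insert z T)) (em (v(z := Beta (a - 1) b)) (insert z T)) (Ord v s (Y - T)) M
        = smul (of_nat b * ec1 T) (emS T) (Ord v s (Y - T)) M"
      unfolding smul_scale ec_ins[OF f] em_ins[OF f] ec1_def emS_def I_def J_def K_def by simp
  qed
  have s2: "of_nat a * (\<Sum>T\<in>Pow Y. smul (ec (v(z := Beta a (b - 1))) (insert z T)) (em (v(z := Beta a (b - 1))) (insert z T)) (Ord v s (Y - T)) M)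
      = (\<Sum>S\<in>Pow Y. smul (of_nat a * ec2 S) (emS S) (Ord v s (Y - S)) M)"
    unfolding sum_distrib_left
  proof (intro sum.cong refl)
    fix T assume "T \<in> Pow Y"
    with finT have f: "finite T" "z \<notin> T" by auto
    have e: "a + (b - 1) + K T + card T = emS T" using ab by (simp add: emS_def)
    show "of_nat a * smul (ec (v(z := Beta a (b - 1))) (insert z T)) (em (v(z := Beta a (b - 1))) (insert z T)) (Ord v s (Y - T)) M
        = smul (of_nat a * ec2 T) (emS T) (Ord v s (Y - T)) M"
      unfolding smul_scale ec_ins[OF f] em_ins[OF f] ec2_def e[unfolded K_def, symmetric] I_def J_def by simp
  qed
  have s3: "(\<Sum>t\<in>Y. cc a b v t * (\<Sum>T\<in>Pow (Y - {t}). smul (ec (v(z := nb a b v t)) (insert z T)) (em (v(z := nb a b v t)) (insert z T)) (Ord v s (Y - {t} - T)) M))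
      = (\<Sum>S\<in>Pow Y. smul ((\<Sum>t\<in>S. cc a b v t) * ec3 S) (emS S) (Ord v s (Y - S)) M)"
  proof -
    have "(\<Sum>t\<in>Y. cc a b v t * (\<Sum>T\<in>Pow (Y - {t}). smul (ec (v(z := nb a b v t)) (insert z T)) (em (v(z := nb a b v t)) (insert z T)) (Ord v s (Y - {t} - T)) M))
      = (\<Sum>t\<in>Y. \<Sum>S\<in>{S. S \<in> Pow Y \<and> t \<in> S}. smul (cc a b v t * ec3 S) (emS S) (Ord v s (Y - S)) M)"
    proof (intro sum.cong refl)
      fix t assume t: "t \<in> Y"
      show "cc a b v t * (\<Sum>T\<in>Pow (Y - {t}). smul (ec (v(z := nb a b v t)) (insert z T)) (em (v(z := nb a b v t)) (insert z T)) (Ord v s (Y - {t} - T)) M)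
          = (\<Sum>S\<in>{S. S \<in> Pow Y \<and> t \<in> S}. smul (cc a b v t * ec3 S) (emS S) (Ord v s (Y - S)) M)"
        unfolding sum_distrib_left
      proof (rule sum.reindex_bij_witness[where i = "\<lambda>S. S - {t}" and j = "insert t"])
        fix T assume T: "T \<in> Pow (Y - {t})"
        show "insert t T - {t} = T" using T by auto
        show "insert t T \<in> {S. S \<in> Pow Y \<and> t \<in> S}" using T t by auto
        have f: "finite T" "z \<notin> T" "t \<notin> T" using T Y finite_subset by auto
        have I: "I (insert t T) = idx1 (v t) + I T" using f by (simp add: I_def)
        have Jt: "J (insert t T) = idx2 (v t) + J T" using f by (simp add: J_def)
        have Kt: "K (insert t T) = idx1 (v t) + idx2 (v t) + K T" using f by (simp add: K_def)
        have ct: "card (insert t T) = Suc (card T)" using f by simp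
        have e1: "ec (v(z := nb a b v t)) (insert z T) = ec3 (insert t T)"
          unfolding nb_def ec_ins[OF f(1,2)] ec3_def I Jt by (simp add: I_def J_def add.assoc)
        have e2: "em (v(z := nb a b v t)) (insert z T) = emS (insert t T)"
          unfolding nb_def em_ins[OF f(1,2)] emS_def Kt ct using ab by (simp add: K_def)
        have e3: "Y - {t} - T = Y - insert t T" by auto
        show "smul (cc a b v t * ec3 (insert t T)) (emS (insert t T)) (Ord v s (Y - insert t T)) M
            = cc a b v t * smul (ec (v(z := nb a b v t)) (insert z T)) (em (v(z := nb a b v t)) (insert z T)) (Ord v s (Y - {t} - T)) M"
          unfolding e1 e2 e3 smul_scale ..
      next
        fix S assume S: "S \<in> {S. S \<in> Pow Y \<and> t \<in> S}"
        show "insert t (S - {t}) = S" using S by auto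
        show "S - {t} \<in> Pow (Y - {t})" using S by auto
      qed
    qed
    also have "\<dots> = (\<Sum>S\<in>Pow Y. \<Sum>t\<in>{t. t \<in> Y \<and> t \<in> S}. smul (cc a b v t * ec3 S) (emS S) (Ord v s (Y - S)) M)"
      using Y(1) by (intro sum.swap_restrict) auto
    also have "\<dots> = (\<Sum>S\<in>Pow Y. smul ((\<Sum>t\<in>S. cc a b v t) * ec3 S) (emS S) (Ord v s (Y - S)) M)"
    proof (intro sum.cong refl)
      fix S assume "S \<in> Pow Y"
      then have "{t. t \<in> Y \<and> t \<in> S} = S" by auto
      then show "(\<Sum>t\<in>{t. t \<in> Y \<and> t \<in> S}. smul (cc a b v t * ec3 S) (emS S) (Ord v s (Y - S)) M)
          = smul ((\<Sum>t\<in>S. cc a b v t) * ec3 S) (emS S) (Ord v s (Y - S)) M"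
        by (simp add: smul_sum_coeff sum_distrib_right)
    qed
    finally show ?thesis .
  qed
  have "(\<Sum>S\<in>Pow Y. smul (of_nat b * ec1 S) (emS S) (Ord v s (Y - S)) M)
      - (\<Sum>S\<in>Pow Y. smul (of_nat a * ec2 S) (emS S) (Ord v s (Y - S)) M)
      + (\<Sum>S\<in>Pow Y. smul ((\<Sum>t\<in>S. cc a b v t) * ec3 S) (emS S) (Ord v s (Y - S)) M)
      = (\<Sum>S\<in>Pow Y. smul (of_nat b * ec1 S - of_nat a * ec2 S + (\<Sum>t\<in>S. cc a b v t) * ec3 S) (emS S) (Ord v s (Y - S)) M)"
    unfolding sum_subtractf[symmetric] sum.distrib[symmetric]
    by (intro sum.cong refl) (simp add: smul_def algebra_simps)
  also have "\<dots> = 0"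
  proof (intro sum.neutral ballI)
    fix S assume "S \<in> Pow Y"
    then have fS: "finite S" using Y finite_subset by auto
    have "of_nat b * ec1 S - of_nat a * ec2 S + (\<Sum>t\<in>S. cc a b v t) * ec3 S = 0"
      using coeff_id[OF ab, of "I S" "J S"] unfolding sum_cc[OF fS] ec1_def ec2_def ec3_def I_def J_def
      by simp
    then show "smul (of_nat b * ec1 S - of_nat a * ec2 S + (\<Sum>t\<in>S. cc a b v t) * ec3 S) (emS S) (Ord v s (Y - S)) M = 0"
      by simp
  qed
  finally show ?thesis using s1 s2 s3 by simp
qed


lemma smul_Dsum:
  "smul c m (Dsum a b v z s Y) M =
     of_nat b * smul c m (OZ v z (Beta (a - 1) b) s Y) M - of_nat a * smul c m (OZ v z (Beta a (b - 1)) s Y) M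
     + (\<Sum>t\<in>Y. cc a b v t * smul c m (OZ v z (nb a b v t) s (Y - {t})) M)"
  by (simp add: smul_def Dsum_def sum_distrib_left algebra_simps)

lemma part2:
  assumes Y: "finite Y"
  shows "of_nat b * (\<Sum>A\<in>{A. A \<subseteq> Y \<and> A \<noteq> {}}. smul (ec v A) (em v A) (OZ v z (Beta (a - 1) b) s (Y - A)) M)
       - of_nat a * (\<Sum>A\<in>{A. A \<subseteq> Y \<and> A \<noteq> {}}. smul (ec v A) (em v A) (OZ v z (Beta a (b - 1)) s (Y - A)) M)
       + (\<Sum>t\<in>Y. cc a b v t * (\<Sum>A\<in>{A. A \<subseteq> Y - {t} \<and> A \<noteq> {}}. smul (ec v A) (em v A) (OZ v z (nb a b v t) s (Y - {t} - A)) M))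
     = (\<Sum>A\<in>{A. A \<subseteq> Y \<and> A \<noteq> {}}. smul (ec v A) (em v A) (Dsum a b v z s (Y - A)) M)"
proof -
  let ?P = "{A. A \<subseteq> Y \<and> A \<noteq> {}}"
  have finP: "finite ?P" using Y by simp
  have "(\<Sum>t\<in>Y. cc a b v t * (\<Sum>A\<in>{A. A \<subseteq> Y - {t} \<and> A \<noteq> {}}. smul (ec v A) (em v A) (OZ v z (nb a b v t) s (Y - {t} - A)) M))
      = (\<Sum>t\<in>Y. \<Sum>A\<in>{A. A \<in> ?P \<and> t \<notin> A}. cc a b v t * smul (ec v A) (em v A) (OZ v z (nb a b v t) s (Y - A - {t})) M)"
  proof (intro sum.cong refl)
    fix t assume t: "t \<in> Y"
    have e: "{A. A \<subseteq> Y - {t} \<and> A \<noteq> {}} = {A. A \<in> ?P \<and> t \<notin> A}" by auto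
    show "cc a b v t * (\<Sum>A\<in>{A. A \<subseteq> Y - {t} \<and> A \<noteq> {}}. smul (ec v A) (em v A) (OZ v z (nb a b v t) s (Y - {t} - A)) M)
        = (\<Sum>A\<in>{A. A \<in> ?P \<and> t \<notin> A}. cc a b v t * smul (ec v A) (em v A) (OZ v z (nb a b v t) s (Y - A - {t})) M)"
      unfolding e sum_distrib_left
    proof (intro sum.cong refl)
      fix A
      have "Y - {t} - A = Y - A - {t}" by blast
      then show "cc a b v t * smul (ec v A) (em v A) (OZ v z (nb a b v t) s (Y - {t} - A)) M
          = cc a b v t * smul (ec v A) (em v A) (OZ v z (nb a b v t) s (Y - A - {t})) M" by (simp only:)
    qed
  qed
  also have "\<dots> = (\<Sum>A\<in>?P. \<Sum>t\<in>{t. t \<in> Y \<and> t \<notin> A}. cc a b v t * smul (ec v A) (em v A) (OZ v z (nb a b v t) s (Y - A - {t})) M)"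
    using Y finP by (intro sum.swap_restrict) auto
  also have "\<dots> = (\<Sum>A\<in>?P. \<Sum>t\<in>Y - A. cc a b v t * smul (ec v A) (em v A) (OZ v z (nb a b v t) s (Y - A - {t})) M)"
    by (intro sum.cong refl) (auto intro: arg_cong[where f="\<lambda>X. sum _ X"])
  finally have e3: "(\<Sum>t\<in>Y. cc a b v t * (\<Sum>A\<in>{A. A \<subseteq> Y - {t} \<and> A \<noteq> {}}. smul (ec v A) (em v A) (OZ v z (nb a b v t) s (Y - {t} - A)) M))
     = (\<Sum>A\<in>?P. \<Sum>t\<in>Y - A. cc a b v t * smul (ec v A) (em v A) (OZ v z (nb a b v t) s (Y - A - {t})) M)" .
  show ?thesis
    apply (subst e3)
    apply (unfold smul_Dsum sum_distrib_left sum_subtractf[symmetric] sum.distrib[symmetric])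
    apply (rule refl)
    done
qed

lemma Dsum_zero:
  assumes B: "finite B" "z \<notin> B" "\<forall>j\<in>B. is_beta (v j)" and ab: "1 \<le> a" "1 \<le> b"
  shows "Y \<subseteq> B \<Longrightarrow> Dsum a b v z s Y M = 0"
proof (induction s arbitrary: Y M)
  case 0
  have "finite (insert z Y)" "finite (insert z (Y - {t}))" for t using 0 B finite_subset by auto
  then show ?case by (simp add: Dsum_def OZ_def Ord_0_nonempty)
next
  case (Suc s)
  have Y: "finite Y" "z \<notin> Y" "\<forall>j\<in>Y. is_beta (v j)" using Suc.prems B finite_subset by auto
  have Yt: "finite (Y - {t})" "z \<notin> Y - {t}" "\<forall>j\<in>Y - {t}. is_beta (v j)" for t using Y by auto
  have sp1: "OZ v z (Beta (a - 1) b) (Suc s) Y M =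
     (\<Sum>T\<in>Pow Y. smul (ec (v(z := Beta (a - 1) b)) (insert z T)) (em (v(z := Beta (a - 1) b)) (insert z T)) (Ord v s (Y - T)) M)
   + (\<Sum>A\<in>{A. A \<subseteq> Y \<and> A \<noteq> {}}. smul (ec v A) (em v A) (OZ v z (Beta (a - 1) b) s (Y - A)) M)"
    by (rule Ord_split[OF Y]) simp
  have sp2: "OZ v z (Beta a (b - 1)) (Suc s) Y M =
     (\<Sum>T\<in>Pow Y. smul (ec (v(z := Beta a (b - 1))) (insert z T)) (em (v(z := Beta a (b - 1))) (insert z T)) (Ord v s (Y - T)) M)
   + (\<Sum>A\<in>{A. A \<subseteq> Y \<and> A \<noteq> {}}. smul (ec v A) (em v A) (OZ v z (Beta a (b - 1)) s (Y - A)) M)"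
    by (rule Ord_split[OF Y]) simp
  have sp3: "OZ v z (nb a b v t) (Suc s) (Y - {t}) M =
     (\<Sum>T\<in>Pow (Y - {t}). smul (ec (v(z := nb a b v t)) (insert z T)) (em (v(z := nb a b v t)) (insert z T)) (Ord v s (Y - {t} - T)) M)
   + (\<Sum>A\<in>{A. A \<subseteq> Y - {t} \<and> A \<noteq> {}}. smul (ec v A) (em v A) (OZ v z (nb a b v t) s (Y - {t} - A)) M)" for t
    by (rule Ord_split[OF Yt]) (simp add: nb_def)
  have z1: "of_nat b * (\<Sum>T\<in>Pow Y. smul (ec (v(z := Beta (a - 1) b)) (insert z T)) (em (v(z := Beta (a - 1) b)) (insert z T)) (Ord v s (Y - T)) M)
       - of_nat a * (\<Sum>T\<in>Pow Y. smul (ec (v(z := Beta a (b - 1))) (insert z T)) (em (v(z := Beta a (b - 1))) (insert z T)) (Ord v s (Y - T)) M)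
       + (\<Sum>t\<in>Y. cc a b v t * (\<Sum>T\<in>Pow (Y - {t}). smul (ec (v(z := nb a b v t)) (insert z T)) (em (v(z := nb a b v t)) (insert z T)) (Ord v s (Y - {t} - T)) M)) = 0"
    by (rule part1_zero[OF Y(1,2) ab])
  have z2: "(\<Sum>A\<in>{A. A \<subseteq> Y \<and> A \<noteq> {}}. smul (ec v A) (em v A) (Dsum a b v z s (Y - A)) M) = 0"
  proof (intro sum.neutral ballI)
    fix A assume "A \<in> {A. A \<subseteq> Y \<and> A \<noteq> {}}"
    then have "Y - A \<subseteq> B" using Suc.prems by auto
    then have "\<And>M'. Dsum a b v z s (Y - A) M' = 0" using Suc.IH by blast
    then show "smul (ec v A) (em v A) (Dsum a b v z s (Y - A)) M = 0" by (simp add: smul_def)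
  qed
  show ?case
    unfolding Dsum_def sp1 sp2 sp3 using z1 z2 part2[OF Y(1), of b v z a s M]
    by (simp add: sum.distrib algebra_simps)
qed


lemma strict_mono_sorted:
  fixes \<sigma> :: "nat \<Rightarrow> nat"
  assumes "strict_mono_on {m..<n} \<sigma>"
  shows "map \<sigma> [m..<n] = sorted_list_of_set (\<sigma> ` {m..<n})"
proof -
  have "sorted_wrt (<) (map \<sigma> [m..<n])"
    unfolding sorted_wrt_iff_nth_less
  proof (intro allI impI)
    fix i j assume ij: "i < j" "j < length (map \<sigma> [m..<n])"
    then have "m + i \<in> {m..<n}" "m + j \<in> {m..<n}" "m + i < m + j" by auto
    then have "\<sigma> (m + i) < \<sigma> (m + j)" using assms unfolding strict_mono_on_def by blast
    then show "map \<sigma> [m..<n] ! i < map \<sigma> [m..<n] ! j" using ij by simp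
  qed
  moreover have "sorted_wrt (<) (sorted_list_of_set (\<sigma> ` {m..<n}))" by (rule strict_sorted_list_of_set)
  moreover have "set (map \<sigma> [m..<n]) = set (sorted_list_of_set (\<sigma> ` {m..<n}))" by simp
  ultimately show ?thesis using strict_sorted_equal[of "map \<sigma> [m..<n]" "sorted_list_of_set (\<sigma> ` {m..<n})"] by simp
qed

lemma shuffle_facts:
  assumes "\<sigma> \<in> Defs.shuffles i k" "i \<le> k"
  shows "map \<sigma> [0..<i] = sorted_list_of_set (\<sigma> ` {..<i})"
    and "map \<sigma> [i..<k] = sorted_list_of_set ({..<k} - \<sigma> ` {..<i})"
    and "\<sigma> ` {..<i} \<subseteq> {..<k}" "card (\<sigma> ` {..<i}) = i"
proof -
  have p: "\<sigma> permutes {..<k}" and m1: "strict_mono_on {..<i} \<sigma>" and m2: "strict_mono_on {i..<k} \<sigma>"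
    using assms by (auto simp: shuffles_def)
  show "map \<sigma> [0..<i] = sorted_list_of_set (\<sigma> ` {..<i})"
    using strict_mono_sorted[of 0 i \<sigma>] m1 by (simp add: atLeast0LessThan)
  have inj: "inj_on \<sigma> {..<k}" using p by (simp add: permutes_inj_on)
  have im: "\<sigma> ` {..<k} = {..<k}" using p by (simp add: permutes_image)
  have u: "{..<k} = {..<i} \<union> {i..<k}" using assms(2) by auto
  have "\<sigma> ` {i..<k} = {..<k} - \<sigma> ` {..<i}"
  proof -
    have "\<sigma> ` {..<i} \<union> \<sigma> ` {i..<k} = {..<k}" using im u by (metis image_Un)
    moreover have "\<sigma> ` {..<i} \<inter> \<sigma> ` {i..<k} = {}"
      using inj u by (auto simp: inj_on_def) (metis lessThan_iff atLeastLessThan_iff not_less UnI1 UnI2)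
    ultimately show ?thesis by blast
  qed
  then show "map \<sigma> [i..<k] = sorted_list_of_set ({..<k} - \<sigma> ` {..<i})"
    using strict_mono_sorted[OF m2] by simp
  show "\<sigma> ` {..<i} \<subseteq> {..<k}" using im u by auto
  have "inj_on \<sigma> {..<i}" using inj u by (auto intro: inj_on_subset)
  then show "card (\<sigma> ` {..<i}) = i" by (simp add: card_image)
qed

lemma shuffle_bij:
  assumes "i \<le> k"
  shows "bij_betw (\<lambda>\<sigma>. \<sigma> ` {..<i}) (Defs.shuffles i k) {A. A \<subseteq> {..<k} \<and> card A = i}"
  unfolding bij_betw_def
proof
  show "inj_on (\<lambda>\<sigma>. \<sigma> ` {..<i}) (Defs.shuffles i k)"
  proof (rule inj_onI)
    fix \<sigma> \<tau> assume s: "\<sigma> \<in> Defs.shuffles i k" and t: "\<tau> \<in> Defs.shuffles i k" and e: "\<sigma> ` {..<i} = \<tau> ` {..<i}"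
    have a: "map \<sigma> [0..<i] = map \<tau> [0..<i]" "map \<sigma> [i..<k] = map \<tau> [i..<k]"
      using shuffle_facts[OF s assms] shuffle_facts[OF t assms] e by simp_all
    show "\<sigma> = \<tau>"
    proof
      fix x
      show "\<sigma> x = \<tau> x"
      proof (cases "x < i")
        case True
        then show ?thesis using a(1) by (metis (no_types) add_0 diff_zero length_upt nth_map nth_upt)
      next
        case False
        show ?thesis
        proof (cases "x < k")
          case True
          have e1: "map \<sigma> [i..<k] ! (x - i) = \<sigma> x" using True False by simp
          have e2: "map \<tau> [i..<k] ! (x - i) = \<tau> x" using True False by simp
          show ?thesis using a(2) e1 e2 by metis
        next
          case False
          then show ?thesis using s t by (auto simp: shuffles_def permutes_def)
        qed
      qed
    qed
  qed
  show "(\<lambda>\<sigma>. \<sigma> ` {..<i}) ` Defs.shuffles i k = {A. A \<subseteq> {..<k} \<and> card A = i}"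
  proof (rule set_eqI, rule iffI)
    fix A assume "A \<in> (\<lambda>\<sigma>. \<sigma> ` {..<i}) ` Defs.shuffles i k"
    then obtain \<sigma> where "\<sigma> \<in> Defs.shuffles i k" "A = \<sigma> ` {..<i}" by blast
    then show "A \<in> {A. A \<subseteq> {..<k} \<and> card A = i}" using shuffle_facts(3,4)[OF _ assms] by auto
  next
    fix A assume A: "A \<in> {A. A \<subseteq> {..<k} \<and> card A = i}"
    define LA where "LA = sorted_list_of_set A"
    define LB where "LB = sorted_list_of_set ({..<k} - A)"
    have fA: "finite A" using A finite_subset by auto
    have lA: "length LA = i" using A fA by (simp add: LA_def)
    have lB: "length LB = k - i" using A fA by (simp add: LB_def card_Diff_subset)
    define \<sigma> where "\<sigma> x = (if x < i then LA ! x else if x < k then LB ! (x - i) else x)" for x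
    have m: "map \<sigma> [0..<k] = LA @ LB"
    proof (rule nth_equalityI)
      show "length (map \<sigma> [0..<k]) = length (LA @ LB)" using lA lB assms by simp
      fix x assume "x < length (map \<sigma> [0..<k])"
      then show "map \<sigma> [0..<k] ! x = (LA @ LB) ! x" using lA by (simp add: \<sigma>_def nth_append)
    qed
    have dist: "distinct (LA @ LB)" using fA by (auto simp: LA_def LB_def)
    have st: "set (LA @ LB) = {..<k}" using fA A by (auto simp: LA_def LB_def)
    have p: "\<sigma> permutes {..<k}"
    proof (rule bij_imp_permutes)
      have "inj_on \<sigma> (set [0..<k])" using dist m distinct_map[of \<sigma> "[0..<k]"] by simp
      then have "inj_on \<sigma> {..<k}" by (simp add: atLeast0LessThan)
      moreover have "\<sigma> ` {..<k} = {..<k}"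
        using st m by (metis atLeast0LessThan list.set_map set_upt)
      ultimately show "bij_betw \<sigma> {..<k} {..<k}" by (simp add: bij_betw_def)
      fix x assume "x \<notin> {..<k}" then show "\<sigma> x = x" using assms by (simp add: \<sigma>_def)
    qed
    have sLA: "sorted_wrt (<) LA" "sorted_wrt (<) LB" by (simp_all add: LA_def LB_def strict_sorted_list_of_set)
    have m1: "strict_mono_on {..<i} \<sigma>"
      using sLA(1) lA unfolding strict_mono_on_def sorted_wrt_iff_nth_less by (auto simp: \<sigma>_def)
    have m2: "strict_mono_on {i..<k} \<sigma>"
      unfolding strict_mono_on_def
    proof (intro allI impI)
      fix x y assume "x \<in> {i..<k} \<and> y \<in> {i..<k} \<and> x < y"
      then have x: "x \<in> {i..<k}" and y: "y \<in> {i..<k}" and xy: "x < y" by auto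
      then have "LB ! (x - i) < LB ! (y - i)" using sLA(2) lB unfolding sorted_wrt_iff_nth_less by auto
      then show "\<sigma> x < \<sigma> y" using x y by (simp add: \<sigma>_def)
    qed
    have "\<sigma> ` {..<i} = set LA"
    proof -
      have "\<sigma> ` {..<i} = (\<lambda>x. LA ! x) ` {..<length LA}" using lA by (auto simp: \<sigma>_def)
      also have "\<dots> = set LA" by (auto simp: set_conv_nth)
      finally show ?thesis .
    qed
    then have "\<sigma> ` {..<i} = A" using fA by (simp add: LA_def)
    moreover have "\<sigma> \<in> Defs.shuffles i k" using p m1 m2 by (simp add: shuffles_def)
    ultimately show "A \<in> (\<lambda>\<sigma>. \<sigma> ` {..<i}) ` Defs.shuffles i k" by blast
  qed
qed


definition FF :: "gen list \<Rightarrow> nat set \<Rightarrow> nat multiset \<Rightarrow> rat" where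
  "FF vs A M = sum_list (map (\<lambda>(c, g). c * Phihat eps_tilde (g # map ((!) vs) (sorted_list_of_set ({..<length vs} - A))) M)
        (ellV (map ((!) vs) (sorted_list_of_set A))))"

lemma lhat_subsets:
  assumes kos: "\<And>i \<sigma>. \<sigma> \<in> Defs.shuffles i (length vs) \<Longrightarrow> koszul vs \<sigma> = 1"
  shows "Phihat_lhat eps_tilde vs M = (\<Sum>i\<in>{1..length vs}. \<Sum>A\<in>{A. A \<subseteq> {..<length vs} \<and> card A = i}. FF vs A M)"
  unfolding Phihat_lhat_def
proof (intro sum.cong refl)
  fix i assume i: "i \<in> {1..length vs}"
  let ?k = "length vs"
  have ik: "i \<le> ?k" using i by simp
  have "(\<Sum>\<sigma>\<in>Defs.shuffles i ?k. koszul vs \<sigma> *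
        sum_list (map (\<lambda>(c, g). c * Phihat eps_tilde (g # drop i (Defs.permute_list \<sigma> vs)) M)
                      (ellV (take i (Defs.permute_list \<sigma> vs)))))
      = (\<Sum>\<sigma>\<in>Defs.shuffles i ?k. FF vs (\<sigma> ` {..<i}) M)"
  proof (intro sum.cong refl)
    fix \<sigma> assume s: "\<sigma> \<in> Defs.shuffles i ?k"
    have t: "take i (Defs.permute_list \<sigma> vs) = map ((!) vs) (sorted_list_of_set (\<sigma> ` {..<i}))"
      using shuffle_facts(1)[OF s ik, symmetric] ik by (simp add: Defs.permute_list_def take_map)
    have d: "drop i (Defs.permute_list \<sigma> vs) = map ((!) vs) (sorted_list_of_set ({..<?k} - \<sigma> ` {..<i}))"
      using shuffle_facts(2)[OF s ik, symmetric] ik by (simp add: Defs.permute_list_def drop_map)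
    show "koszul vs \<sigma> *
        sum_list (map (\<lambda>(c, g). c * Phihat eps_tilde (g # drop i (Defs.permute_list \<sigma> vs)) M)
                      (ellV (take i (Defs.permute_list \<sigma> vs)))) = FF vs (\<sigma> ` {..<i}) M"
      unfolding t d kos[OF s] FF_def by simp
  qed
  also have "\<dots> = (\<Sum>A\<in>{A. A \<subseteq> {..<?k} \<and> card A = i}. FF vs A M)"
    by (rule sum.reindex_bij_betw[OF shuffle_bij[OF ik]])
  finally show "(\<Sum>\<sigma>\<in>Defs.shuffles i ?k. koszul vs \<sigma> *
        sum_list (map (\<lambda>(c, g). c * Phihat eps_tilde (g # drop i (Defs.permute_list \<sigma> vs)) M)
                      (ellV (take i (Defs.permute_list \<sigma> vs)))))
      = (\<Sum>A\<in>{A. A \<subseteq> {..<?k} \<and> card A = i}. FF vs A M)" .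
qed

lemma ellV_beta: "\<forall>x\<in>set xs. is_beta x \<Longrightarrow> ellV xs = []"
proof (induction xs rule: ellV.induct)
  case (1 g) then show ?case by (cases g) auto
next
  case (2 g h) then show ?case by (cases g; cases h) auto
qed auto

lemma ellV_long: "3 \<le> length xs \<Longrightarrow> ellV xs = []"
  by (induction xs rule: ellV.induct) auto

lemma ellV_zero:
  assumes "length (filter (\<lambda>g. \<not> is_beta g) (xs @ ys)) \<noteq> 1" "(c, g) \<in> set (ellV xs)"
  shows "\<not> is_beta g \<or> (\<exists>y\<in>set ys. \<not> is_beta y)"
proof (rule ccontr)
  assume "\<not> (\<not> is_beta g \<or> (\<exists>y\<in>set ys. \<not> is_beta y))"
  then have g: "is_beta g" and ys: "filter (\<lambda>g. \<not> is_beta g) ys = []" by (auto simp: filter_empty_conv)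
  show False
  proof (cases xs rule: ellV.cases)
    case (1 x)
    then show False using assms g ys by (cases x) auto
  next
    case (2 x y)
    then show False using assms g ys by (cases x; cases y) auto
  qed (use assms in auto)
qed

lemma sorted_pair: "(x::nat) < y \<Longrightarrow> sorted_list_of_set {x, y} = [x, y]"
  using strict_sorted_equal[of "sorted_list_of_set {x, y}" "[x, y]"] strict_sorted_list_of_set[of "{x,y}"]
  by simp

lemma sorted_single: "sorted_list_of_set {x::nat} = [x]"
  by simp

lemma Phihat_OZ:
  assumes X: "X \<subseteq> {..<length vs}" "card X < length vs" "\<forall>j\<in>X. is_beta (vs ! j)" and g: "is_beta g"
  shows "Phihat eps_tilde (g # map ((!) vs) (sorted_list_of_set X)) M
       = (\<Sum>s\<le>length vs. OZ ((!) vs) (length vs) g s X M / of_nat (fact s))"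
proof -
  let ?k = "length vs"
  let ?v = "((!) vs)(?k := g)"
  let ?L = "?k # sorted_list_of_set X"
  have fX: "finite X" using X finite_subset by auto
  have kX: "?k \<notin> X" using X by auto
  have m: "map ?v ?L = g # map ((!) vs) (sorted_list_of_set X)"
    using X fX by (auto intro!: map_cong)
  have dL: "distinct ?L" using fX kX by simp
  have bL: "\<forall>j\<in>set ?L. is_beta (?v j)" using X fX g by auto
  have "Phihat eps_tilde (g # map ((!) vs) (sorted_list_of_set X)) M = Phihat eps_tilde (map ?v ?L) M"
    by (simp only: m)
  also have "\<dots> = (\<Sum>s\<le>length ?L. Ord ?v s (set ?L) M / of_nat (fact s))"
    by (rule Phihat_rep[OF dL bL])
  also have "\<dots> = Phi ?v (insert ?k X) (length ?L) M"
    using fX by (simp only: Phi_def set_simps set_sorted_list_of_set)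
  also have "\<dots> = Phi ?v (insert ?k X) ?k M"
    using fX kX X by (intro Phi_extend) auto
  finally show ?thesis by (simp add: Phi_def OZ_def)
qed


lemma is_beta_E: "is_beta g \<Longrightarrow> (\<And>i j. g = Beta i j \<Longrightarrow> P) \<Longrightarrow> P"
  by (cases g) auto

lemma ellV_pair:
  assumes "t \<noteq> p" "vs ! p = Alpha a b" "is_beta (vs ! t)"
  shows "ellV (map ((!) vs) (sorted_list_of_set {p, t})) = [(cc a b ((!) vs) t, nb a b ((!) vs) t)]"
proof -
  obtain k l where t: "vs ! t = Beta k l" using assms(3) by (rule is_beta_E)
  show ?thesis
  proof (cases "p < t")
    case True
    then show ?thesis using assms t by (simp add: sorted_pair cc_def nb_def)
  next
    case False
    then have "t < p" using assms(1) by simp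
    then have "sorted_list_of_set {p, t} = [t, p]" using sorted_pair[of t p] by (simp add: insert_commute)
    then show ?thesis using assms t by (simp add: cc_def nb_def)
  qed
qed

lemma main_case:
  assumes k: "length vs = k" and p: "p < k" "vs ! p = Alpha a b" "1 \<le> a" "1 \<le> b"
    and others: "\<forall>q<k. q \<noteq> p \<longrightarrow> is_beta (vs ! q)"
  shows "Phihat_lhat eps_tilde vs M = 0"
proof -
  let ?v = "(!) vs"
  define B0 where "B0 = {..<k} - {p}"
  define G where "G i = (\<Sum>A\<in>{A. A \<subseteq> {..<k} \<and> card A = i}. FF vs A M)" for i
  have nb: "\<And>q. q < k \<Longrightarrow> \<not> is_beta (vs ! q) \<Longrightarrow> q = p" using others by blast
  have kos: "koszul vs \<sigma> = 1" if "\<sigma> \<in> Defs.shuffles i (length vs)" for i \<sigma>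
    using that nb k by (intro koszul_one) (auto simp: shuffles_def)
  have step1: "Phihat_lhat eps_tilde vs M = (\<Sum>i\<in>{1..k}. G i)"
    using lhat_subsets[OF kos, where M=M] k by (simp add: G_def)
  have G3: "G i = 0" if "3 \<le> i" for i
    unfolding G_def
  proof (intro sum.neutral ballI)
    fix A assume A: "A \<in> {A. A \<subseteq> {..<k} \<and> card A = i}"
    then have "finite A" using finite_subset by auto
    then have "ellV (map ((!) vs) (sorted_list_of_set A)) = []" using A that by (intro ellV_long) simp
    then show "FF vs A M = 0" by (simp add: FF_def)
  qed
  have G2: "G 2 = 0" if "k < 2"
  proof -
    have e: "{A. A \<subseteq> {..<k} \<and> card A = 2} = {}"
    proof safe
      fix A assume "A \<subseteq> {..<k}" "card A = 2"
      then have "card A \<le> card {..<k}" by (intro card_mono) auto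
      then show "A \<in> {}" using that \<open>card A = 2\<close> by simp
    qed
    show ?thesis unfolding G_def e by simp
  qed
  have step2: "(\<Sum>i\<in>{1..k}. G i) = G 1 + G 2"
  proof -
    have "(\<Sum>i\<in>{1..k}. G i) = (\<Sum>i\<in>{1..k} \<union> {1,2}. G i)"
      by (rule sum.mono_neutral_left) (use G2 p(1) in auto)
    also have "\<dots> = (\<Sum>i\<in>{1,2}. G i)"
      by (rule sum.mono_neutral_right) (use G3 in auto)
    finally show ?thesis by simp
  qed
  have B0: "B0 \<subseteq> {..<length vs}" "card B0 < length vs" "\<forall>j\<in>B0. is_beta (vs ! j)" "finite B0"
    using p k others by (auto simp: B0_def)
  have Bt: "B0 - {t} \<subseteq> {..<length vs}" "card (B0 - {t}) < length vs" "\<forall>j\<in>B0 - {t}. is_beta (vs ! j)" for t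
    using B0 card_Diff1_le[of B0 t] by auto
  have G1: "G 1 = of_nat b * (\<Sum>s\<le>k. OZ ?v k (Beta (a - 1) b) s B0 M / of_nat (fact s))
                - of_nat a * (\<Sum>s\<le>k. OZ ?v k (Beta a (b - 1)) s B0 M / of_nat (fact s))"
  proof -
    have "G 1 = (\<Sum>A\<in>{{p}}. FF vs A M)"
      unfolding G_def
    proof (rule sum.mono_neutral_right)
      show "finite {A. A \<subseteq> {..<k} \<and> card A = 1}" by simp
      show "{{p}} \<subseteq> {A. A \<subseteq> {..<k} \<and> card A = 1}" using p by auto
      show "\<forall>A\<in>{A. A \<subseteq> {..<k} \<and> card A = 1} - {{p}}. FF vs A M = 0"
      proof
        fix A assume "A \<in> {A. A \<subseteq> {..<k} \<and> card A = 1} - {{p}}"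
        then obtain q where q: "A = {q}" "q < k" "q \<noteq> p" by (auto simp: card_1_singleton_iff)
        then have "ellV (map ((!) vs) (sorted_list_of_set A)) = []"
          using others by (intro ellV_beta) auto
        then show "FF vs A M = 0" by (simp add: FF_def)
      qed
    qed
    also have "\<dots> = of_nat b * Phihat eps_tilde (Beta (a - 1) b # map ((!) vs) (sorted_list_of_set B0)) M
                  - of_nat a * Phihat eps_tilde (Beta a (b - 1) # map ((!) vs) (sorted_list_of_set B0)) M"
      using p k by (simp add: FF_def B0_def)
    finally show ?thesis using Phihat_OZ[OF B0(1-3)] k by simp
  qed
  have G2': "G 2 = (\<Sum>t\<in>B0. cc a b ?v t * (\<Sum>s\<le>k. OZ ?v k (nb a b ?v t) s (B0 - {t}) M / of_nat (fact s)))"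
  proof -
    have "G 2 = (\<Sum>A\<in>(\<lambda>t. {p, t}) ` B0. FF vs A M)"
      unfolding G_def
    proof (rule sum.mono_neutral_right)
      show "finite {A. A \<subseteq> {..<k} \<and> card A = 2}" by simp
      show "(\<lambda>t. {p, t}) ` B0 \<subseteq> {A. A \<subseteq> {..<k} \<and> card A = 2}" using p by (auto simp: B0_def)
      show "\<forall>A\<in>{A. A \<subseteq> {..<k} \<and> card A = 2} - (\<lambda>t. {p, t}) ` B0. FF vs A M = 0"
      proof
        fix A assume A: "A \<in> {A. A \<subseteq> {..<k} \<and> card A = 2} - (\<lambda>t. {p, t}) ` B0"
        then obtain x y where xy: "A = {x, y}" "x \<noteq> y" by (auto simp: card_2_iff)
        have "p \<notin> A"
        proof
          assume "p \<in> A"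
          then obtain t where "A = {p, t}" "t \<noteq> p" using xy by auto
          then show False using A by (auto simp: B0_def)
        qed
        then have "\<forall>j\<in>A. is_beta (vs ! j)" using A others by auto
        moreover have "finite A" using xy by simp
        ultimately have "ellV (map ((!) vs) (sorted_list_of_set A)) = []"
          by (intro ellV_beta) auto
        then show "FF vs A M = 0" by (simp add: FF_def)
      qed
    qed
    also have "\<dots> = (\<Sum>t\<in>B0. FF vs {p, t} M)"
    proof (rule sum.reindex[unfolded comp_def])
      show "inj_on (\<lambda>t. {p, t}) B0" by (auto simp: inj_on_def B0_def doubleton_eq_iff)
    qed
    also have "\<dots> = (\<Sum>t\<in>B0. cc a b ?v t * (\<Sum>s\<le>k. OZ ?v k (nb a b ?v t) s (B0 - {t}) M / of_nat (fact s)))"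
    proof (intro sum.cong refl)
      fix t assume t: "t \<in> B0"
      have e: "{..<length vs} - {p, t} = B0 - {t}" using k by (auto simp: B0_def)
      have bt: "is_beta (nb a b ?v t)" by (simp add: nb_def)
      have "FF vs {p, t} M = cc a b ?v t * Phihat eps_tilde (nb a b ?v t # map ((!) vs) (sorted_list_of_set (B0 - {t}))) M"
        unfolding FF_def e using t others p by (subst ellV_pair) (auto simp: B0_def)
      then show "FF vs {p, t} M = cc a b ?v t * (\<Sum>s\<le>k. OZ ?v k (nb a b ?v t) s (B0 - {t}) M / of_nat (fact s))"
        using Phihat_OZ[OF Bt bt] k by simp
    qed
    finally show ?thesis .
  qed
  define X1 where "X1 s = OZ ?v k (Beta (a - 1) b) s B0 M" for s
  define X2 where "X2 s = OZ ?v k (Beta a (b - 1)) s B0 M" for s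
  define X3 where "X3 t s = OZ ?v k (nb a b ?v t) s (B0 - {t}) M" for t s
  have d1: "(\<Sum>s\<le>k. (of_nat b * X1 s) / of_nat (fact s)) = of_nat b * (\<Sum>s\<le>k. X1 s / of_nat (fact s))"
    by (simp add: sum_distrib_left)
  have d2: "(\<Sum>s\<le>k. (of_nat a * X2 s) / of_nat (fact s)) = of_nat a * (\<Sum>s\<le>k. X2 s / of_nat (fact s))"
    by (simp add: sum_distrib_left)
  have d3: "(\<Sum>s\<le>k. (\<Sum>t\<in>B0. cc a b ?v t * X3 t s) / of_nat (fact s))
      = (\<Sum>t\<in>B0. cc a b ?v t * (\<Sum>s\<le>k. X3 t s / of_nat (fact s)))"
    by (simp add: sum_divide_distrib sum_distrib_left sum.swap[of _ "{..k}" B0])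
  have "G 1 + G 2 = (\<Sum>s\<le>k. (of_nat b * X1 s - of_nat a * X2 s + (\<Sum>t\<in>B0. cc a b ?v t * X3 t s)) / of_nat (fact s))"
    unfolding G1 G2' add_divide_distrib diff_divide_distrib sum.distrib sum_subtractf d1 d2 d3
    by (simp add: X1_def X2_def X3_def)
  also have "\<dots> = (\<Sum>s\<le>k. Dsum a b ?v k s B0 M / of_nat (fact s))"
    by (simp add: Dsum_def X1_def X2_def X3_def)
  also have "\<dots> = 0"
    using Dsum_zero[OF B0(4) _ B0(3) p(3,4)] by (simp add: B0_def)
  finally show ?thesis using step1 step2 by simp
qed


lemma deg_sum_beta:
  "\<forall>g\<in>set vs. is_beta g \<Longrightarrow>
   sum_list (map deg vs) = - 2 * int (length vs) - 2 * int (sum_list (map (\<lambda>g. idx1 g + idx2 g) vs))"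
proof (induction vs)
  case (Cons g vs)
  then obtain i j where "g = Beta i j" by (auto elim: is_beta_E)
  then show ?case using Cons by simp
qed simp

lemma deg_part:
  assumes vs: "vs \<noteq> []" "\<forall>g\<in>set vs. valid_gen g"
  shows "\<forall>(c, m)\<in>set (eps_tilde vs). c \<noteq> 0 \<longrightarrow> 1 \<le> m \<and> degC m = sum_list (map deg vs)"
proof (cases "\<forall>g\<in>set vs. is_beta g")
  case True
  define S where "S = sum_list (map (\<lambda>g. idx1 g + idx2 g) vs)"
  obtain g rest where gr: "vs = g # rest" using vs by (cases vs) auto
  obtain i j where g: "g = Beta i j" using True gr by (auto elim: is_beta_E)
  have "valid_gen g" using vs gr by simp
  then have "1 \<le> i + j" using g by auto
  then have S1: "1 \<le> S" using gr g by (simp add: S_def)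
  have L1: "1 \<le> length vs" using vs by (cases vs) auto
  have e: "eps_tilde vs = [(1 / (of_nat (fact (sum_list (map idx1 vs))) * of_nat (fact (sum_list (map idx2 vs)))),
             S + length vs - 1)]"
    using True vs by (simp add: eps_tilde_def S_def)
  have "degC (S + length vs - 1) = sum_list (map deg vs)"
    unfolding deg_sum_beta[OF True] degC_def S_def[symmetric] using L1 by (simp add: of_nat_diff)
  moreover have "1 \<le> S + length vs - 1" using S1 L1 by simp
  ultimately show ?thesis unfolding e by auto
next
  case False
  then have "eps_tilde vs = []" unfolding eps_tilde_def by (simp only: if_False de_Morgan_conj) auto
  then show ?thesis by simp
qed

lemma plist_eq: "Defs.permute_list = Permutations.permute_list"
  by (intro ext) (simp add: Defs.permute_list_def Permutations.permute_list_def)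

lemma sym_part:
  assumes s: "\<sigma> permutes {..<length vs}"
  shows "coeffC (eps_tilde (Defs.permute_list \<sigma> vs)) m = koszul vs \<sigma> * coeffC (eps_tilde vs) m"
proof -
  have ms: "mset (Defs.permute_list \<sigma> vs) = mset vs" using s by (simp add: plist_eq)
  have sl: "sum_list (map f (Defs.permute_list \<sigma> vs)) = sum_list (map f vs)" for f :: "gen \<Rightarrow> nat"
    by (metis ms mset_map sum_mset_sum_list)
  have st: "set (Defs.permute_list \<sigma> vs) = set vs" by (metis ms set_mset_mset)
  have ln: "length (Defs.permute_list \<sigma> vs) = length vs" by simp
  have ne: "Defs.permute_list \<sigma> vs \<noteq> [] \<longleftrightarrow> vs \<noteq> []" using ln by (metis length_0_conv)
  show ?thesis
  proof (cases "\<forall>g\<in>set vs. is_beta g")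
    case True
    have "koszul vs \<sigma> = 1"
      using s True by (intro koszul_one) auto
    moreover have "eps_tilde (Defs.permute_list \<sigma> vs) = eps_tilde vs"
      unfolding eps_tilde_def sl st ln ne ..
    ultimately show ?thesis by simp
  next
    case False
    then have "eps_tilde (Defs.permute_list \<sigma> vs) = []" "eps_tilde vs = []"
      using st by (auto simp: eps_tilde_def)
    then show ?thesis by (simp add: coeffC_def)
  qed
qed

lemma sl0: "(\<And>x. x \<in> set xs \<Longrightarrow> f x = 0) \<Longrightarrow> sum_list (map f xs) = (0::rat)"
  by (induction xs) auto

lemma zero_case:
  assumes "card {q. q < length vs \<and> \<not> is_beta (vs ! q)} \<noteq> 1"
  shows "Phihat_lhat eps_tilde vs M = 0"
  unfolding Phihat_lhat_def
proof (intro sum.neutral ballI)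
  fix i \<sigma> assume i: "i \<in> {1..length vs}" and s: "\<sigma> \<in> Defs.shuffles i (length vs)"
  have p: "\<sigma> permutes {..<length vs}" using s by (simp add: shuffles_def)
  let ?xs = "take i (Defs.permute_list \<sigma> vs)"
  let ?ys = "drop i (Defs.permute_list \<sigma> vs)"
  have "length (filter (\<lambda>g. \<not> is_beta g) (?xs @ ?ys)) = length (filter (\<lambda>g. \<not> is_beta g) vs)"
  proof -
    have "mset (?xs @ ?ys) = mset vs" using p by (simp add: plist_eq)
    then show ?thesis by (metis mset_filter size_mset)
  qed
  then have cnt: "length (filter (\<lambda>g. \<not> is_beta g) (?xs @ ?ys)) \<noteq> 1"
    using assms by (simp add: length_filter_conv_card)
  have "sum_list (map (\<lambda>(c, g). c * Phihat eps_tilde (g # ?ys) M) (ellV ?xs)) = 0"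
  proof (rule sl0)
    fix x assume "x \<in> set (ellV ?xs)"
    obtain c g where xcg: "x = (c, g)" by (cases x)
    have cg: "(c, g) \<in> set (ellV ?xs)" "x = (c, g)" using xcg \<open>x \<in> set (ellV ?xs)\<close> by auto
    from ellV_zero[OF cnt cg(1)] obtain h where "h \<in> set (g # ?ys)" "\<not> is_beta h" by auto
    then have "Phihat eps_tilde (g # ?ys) M = 0" by (rule Phihat_zero)
    then show "(\<lambda>(c, g). c * Phihat eps_tilde (g # ?ys) M) x = 0" using cg by simp
  qed
  then show "koszul vs \<sigma> * sum_list (map (\<lambda>(c, g). c * Phihat eps_tilde (g # ?ys) M) (ellV ?xs)) = 0"
    by simp
qed

theorem mainTheorem15:
  shows "Linf_hom_V_Co eps_tilde"
  unfolding Linf_hom_V_Co_def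
proof (intro allI impI)
  fix vs assume h: "vs \<noteq> [] \<and> (\<forall>g\<in>set vs. valid_gen g)"
  have A: "\<forall>(c, m)\<in>set (eps_tilde vs). c \<noteq> 0 \<longrightarrow> 1 \<le> m \<and> degC m = sum_list (map deg vs)"
    using h by (intro deg_part) auto
  have B: "\<forall>\<sigma> m. \<sigma> permutes {..<length vs} \<longrightarrow>
            coeffC (eps_tilde (Defs.permute_list \<sigma> vs)) m = koszul vs \<sigma> * coeffC (eps_tilde vs) m"
    using sym_part by blast
  have C: "\<forall>M. Phihat_lhat eps_tilde vs M = 0"
  proof
    fix M
    show "Phihat_lhat eps_tilde vs M = 0"
    proof (cases "card {q. q < length vs \<and> \<not> is_beta (vs ! q)} = 1")
      case True
      then obtain p where P: "{q. q < length vs \<and> \<not> is_beta (vs ! q)} = {p}" by (auto simp: card_1_singleton_iff)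
      then have pk: "p < length vs" "\<not> is_beta (vs ! p)" by auto
      then obtain a b where ab: "vs ! p = Alpha a b" by (cases "vs ! p") auto
      have "valid_gen (vs ! p)" using h pk by auto
      then have a1: "1 \<le> a" "1 \<le> b" using ab by auto
      have "\<forall>q<length vs. q \<noteq> p \<longrightarrow> is_beta (vs ! q)" using P by auto
      then show ?thesis using main_case[OF refl pk(1) ab a1] by simp
    next
      case False
      then show ?thesis by (rule zero_case)
    qed
  qed
  show "(\<forall>(c, m)\<in>set (eps_tilde vs). c \<noteq> 0 \<longrightarrow> 1 \<le> m \<and> degC m = sum_list (map deg vs)) \<and>
        (\<forall>\<sigma> m. \<sigma> permutes {..<length vs} \<longrightarrow>
            coeffC (eps_tilde (Defs.permute_list \<sigma> vs)) m = koszul vs \<sigma> * coeffC (eps_tilde vs) m) \<and>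
        (\<forall>M. Phihat_lhat eps_tilde vs M = 0)"
    using A B C by blast
qed

end
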